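(* Let $p$ be a prime, $z=cE_4$ a scalar matrix with $c\in\mathbb Q^\times$, and for a function $h$ on $G(\mathbb Q_p)$ put $$J_G(zu_{\min},h)=(1-p^{-1})^{-1}\int_{\mathbb Q_p}\int_{K_p}h(zk^{-1}u_{\min}(x)k)\,|x|_p\,dk\,dx.$$ Let $a_3\ge a_1\ge a_2\ge0$ and $h=h_{a_1,a_2,a_3}$. If $a_3$ is odd then $J_G(zu_{\min},h)=0$. If $a_3=2m$ is even, write the double coset so that $m\ge a_1\ge a_2\ge 0$ (possible by the Weyl group action); then $$J_G(zu_{\min},h_{a_1,a_2,a_3})=\begin{cases}(1-p^{-2})^{-1}&\text{if }a_1=a_2=m\text{ and }|c|_p=p^m,\\ p^{a_3-2a_2}&\text{if }m=a_1>a_2\text{ and }|c|_p=p^m,\\ 0&\text{otherwise.}\end{cases}$$ Moreover, if $h_p$ is the characteristic function of $\{x\in K_p: x\equiv E_4\bmod p^l\mathbb Z_p\}$ ($l\ge1$), then $J_G(zu_{\min},h_p)=p^{-2l}(1-p^{-2})^{-1}$ if $c\equiv1\bmod p^l\mathbb Z_p$ and $0$ otherwise.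
   Context: $G=GSp_4$, $K_p=G(\mathbb Z_p)$ with Haar measure $dk$ of total mass 1, $dx$ the Haar measure on $\mathbb Q_p$ with ${\rm vol}(\mathbb Z_p)=1$. $u_{\min}(x)$ is the unipotent matrix $E_4+xe_{13}$ (identity with $x$ in position $(1,3)$). $h_{a_1,a_2,a_3}$ is the characteristic function of $K_p\,{\rm diag}(p^{-a_1},p^{-a_2},p^{a_1-a_3},p^{a_2-a_3})K_p$. *)

theory Defs
  imports "HOL-Analysis.Analysis" "HOL-Probability.Probability"
          "HOL-Computational_Algebra.Primes"
begin

definition padic_val_rat :: "nat \<Rightarrow> rat \<Rightarrow> int" where
  "padic_val_rat p q = (case quotient_of q of (a, b) \<Rightarrow>
      int (multiplicity (int p) a) - int (multiplicity (int p) b))"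

definition padic_abs_rat :: "nat \<Rightarrow> rat \<Rightarrow> real" where
  "padic_abs_rat p q = (if q = 0 then 0 else real p powr (- real_of_int (padic_val_rat p q)))"

text \<open>This is the defining universal
  description of the completion of Q at p (unique up to unique isometric isomorphism).\<close>

definition is_Qp :: "nat \<Rightarrow> ('a::field_char_0 \<Rightarrow> real) \<Rightarrow> bool" where
  "is_Qp p absv \<longleftrightarrow>
     (\<forall>x. absv x \<ge> 0) \<and> (\<forall>x. absv x = 0 \<longleftrightarrow> x = 0) \<and>
     (\<forall>x y. absv (x * y) = absv x * absv y) \<and>
     (\<forall>x y. absv (x + y) \<le> max (absv x) (absv y)) \<and>
     (\<forall>q. absv (of_rat q) = padic_abs_rat p q) \<and>
     (\<forall>X :: nat \<Rightarrow> 'a. (\<forall>e>0. \<exists>N. \<forall>m\<ge>N. \<forall>n\<ge>N. absv (X m - X n) < e) \<longrightarrow>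
         (\<exists>L. \<forall>e>0. \<exists>N. \<forall>n\<ge>N. absv (X n - L) < e)) \<and>
     (\<forall>x. \<forall>e>0. \<exists>q. absv (x - of_rat q) < e)"

text \<open>Closed balls of Q_p; they generate the Borel sigma algebra of Q_p.\<close>
definition Qp_balls :: "nat \<Rightarrow> ('a::field_char_0 \<Rightarrow> real) \<Rightarrow> 'a set set" where
  "Qp_balls p absv = {{y. absv (y - x) \<le> real p powr (- real_of_int n)} | x n. True}"

definition haar_Qp :: "nat \<Rightarrow> ('a::field_char_0 \<Rightarrow> real) \<Rightarrow> 'a measure \<Rightarrow> bool" where
  "haar_Qp p absv dx \<longleftrightarrow>
     space dx = UNIV \<and> sets dx = sigma_sets UNIV (Qp_balls p absv) \<and>
     (\<forall>t. \<forall>A\<in>sets dx. emeasure dx ((\<lambda>y. t + y) ` A) = emeasure dx A) \<and>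
     emeasure dx {y. absv y \<le> 1} = 1"

type_synonym 'a mat4 = "'a ^ 4 ^ 4"

text \<open>Indices 1,2,3,4 of the paper correspond to (0::4),(1::4),(2::4),(3::4).\<close>
definition Jmat :: "'a::comm_ring_1 mat4" where
  "Jmat = (\<chi> i j. if (i = 0 \<and> j = 2) \<or> (i = 1 \<and> j = 3) then 1
                  else if (i = 2 \<and> j = 0) \<or> (i = 3 \<and> j = 1) then -1 else 0)"

definition GSp4 :: "'a::field set \<Rightarrow> 'a mat4 set" where
  "GSp4 R = {g. (\<forall>i j. g $ i $ j \<in> R) \<and>
      (\<exists>\<mu>. \<mu> \<noteq> 0 \<and> \<mu> \<in> R \<and> inverse \<mu> \<in> R \<and> transpose g ** Jmat ** g = mat \<mu> ** Jmat)}"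

definition GQp :: "('a::field_char_0 \<Rightarrow> real) \<Rightarrow> 'a mat4 set" where
  "GQp absv = GSp4 UNIV"

definition Kp :: "('a::field_char_0 \<Rightarrow> real) \<Rightarrow> 'a mat4 set" where
  "Kp absv = GSp4 {x. absv x \<le> 1}"

text \<open>Open balls (cosets of principal congruence subgroups) in K_p; they generate its
  Borel sigma algebra.\<close>
definition Kp_balls :: "nat \<Rightarrow> ('a::field_char_0 \<Rightarrow> real) \<Rightarrow> 'a mat4 set set" where
  "Kp_balls p absv = {{k \<in> Kp absv. \<forall>i j. absv (k $ i $ j - k0 $ i $ j) \<le> real p powr (- real n)}
                      | k0 n. k0 \<in> Kp absv}"

definition haar_Kp :: "nat \<Rightarrow> ('a::field_char_0 \<Rightarrow> real) \<Rightarrow> 'a mat4 measure \<Rightarrow> bool" where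
  "haar_Kp p absv dk \<longleftrightarrow>
     space dk = Kp absv \<and> sets dk = sigma_sets (Kp absv) (Kp_balls p absv) \<and>
     emeasure dk (Kp absv) = 1 \<and>
     (\<forall>g\<in>Kp absv. \<forall>A\<in>sets dk. emeasure dk ((\<lambda>k. g ** k) ` A) = emeasure dk A)"

definition u_min :: "'a::field \<Rightarrow> 'a mat4" where
  "u_min x = mat 1 + (\<chi> i j. if i = 0 \<and> j = 2 then x else 0)"

definition diag4 :: "'a::zero \<Rightarrow> 'a \<Rightarrow> 'a \<Rightarrow> 'a \<Rightarrow> 'a mat4" where
  "diag4 d1 d2 d3 d4 = (\<chi> i j. if i = j then
       (if i = 0 then d1 else if i = 1 then d2 else if i = 2 then d3 else d4) else 0)"

definition h_coset :: "nat \<Rightarrow> ('a::field_char_0 \<Rightarrow> real) \<Rightarrow> int \<Rightarrow> int \<Rightarrow> int \<Rightarrow> 'a mat4 \<Rightarrow> real" where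
  "h_coset p absv a1 a2 a3 =
     indicator {k1 ** diag4 (of_nat p powi (- a1)) (of_nat p powi (- a2))
                            (of_nat p powi (a1 - a3)) (of_nat p powi (a2 - a3)) ** k2
               | k1 k2. k1 \<in> Kp absv \<and> k2 \<in> Kp absv}"

definition h_level :: "nat \<Rightarrow> ('a::field_char_0 \<Rightarrow> real) \<Rightarrow> nat \<Rightarrow> 'a mat4 \<Rightarrow> real" where
  "h_level p absv l = indicator {k \<in> Kp absv. \<forall>i j. absv (k $ i $ j - mat 1 $ i $ j) \<le> real p powr (- real l)}"

definition J_G :: "nat \<Rightarrow> ('a::field_char_0 \<Rightarrow> real) \<Rightarrow> 'a measure \<Rightarrow> 'a mat4 measure \<Rightarrow>
                   rat \<Rightarrow> ('a mat4 \<Rightarrow> real) \<Rightarrow> ennreal" where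
  "J_G p absv dx dk c h = ennreal (inverse (1 - inverse (real p))) *
     (\<integral>\<^sup>+ x. (\<integral>\<^sup>+ k. ennreal (h (mat (of_rat c) ** matrix_inv k ** u_min x ** k) * absv x) \<partial>dk) \<partial>dx)"

end

theory Submission
  imports Defs
begin


locale qp =
  fixes p :: nat and absv :: "'a::field_char_0 \<Rightarrow> real"
  assumes prime: "prime p" and isq: "is_Qp p absv"
begin

lemmas isq' = isq[unfolded is_Qp_def]
lemma nonneg[simp]: "absv x \<ge> 0" using isq'[THEN conjunct1] by blast
lemma zero_iff[simp]: "absv x = 0 \<longleftrightarrow> x = 0" using isq'[THEN conjunct2, THEN conjunct1] by blast
lemma mult: "absv (x * y) = absv x * absv y" using isq'[THEN conjunct2, THEN conjunct2, THEN conjunct1] by blast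
lemma ultra: "absv (x + y) \<le> max (absv x) (absv y)" using isq'[THEN conjunct2, THEN conjunct2, THEN conjunct2, THEN conjunct1] by blast
lemma rat: "absv (of_rat q) = padic_abs_rat p q" using isq'[THEN conjunct2, THEN conjunct2, THEN conjunct2, THEN conjunct2, THEN conjunct1] by blast
lemma dense: "e > 0 \<Longrightarrow> \<exists>q. absv (x - of_rat q) < e" using isq'[THEN conjunct2, THEN conjunct2, THEN conjunct2, THEN conjunct2, THEN conjunct2, THEN conjunct2] by blast

lemma p_gt1: "real p > 1" using prime prime_gt_1_nat by auto
lemma p_pos: "real p > 0" using p_gt1 by auto

lemma abs_0[simp]: "absv 0 = 0" by simp
lemma abs_1[simp]: "absv 1 = 1"
proof -
  have "absv 1 = absv 1 * absv 1" using mult[of 1 1] by simp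
  moreover have "absv 1 \<noteq> 0" by simp
  ultimately show ?thesis by (metis mult_cancel_left1)
qed
lemma abs_m1[simp]: "absv (-1) = 1"
proof -
  have "absv (-1) * absv (-1) = 1" using mult[of "-1" "-1"] by simp
  then have "(absv (-1) - 1) * (absv (-1) + 1) = 0" by (simp add: algebra_simps)
  moreover have "absv (-1) + 1 \<noteq> 0" using nonneg[of "-1"] by linarith
  ultimately show ?thesis by simp
qed
lemma abs_uminus[simp]: "absv (- x) = absv x"
  using mult[of "-1" x] by simp
lemma abs_diff_sym: "absv (x - y) = absv (y - x)"
  by (metis abs_uminus minus_diff_eq)
lemma abs_inverse: "absv (inverse x) = inverse (absv x)"
proof (cases "x = 0")
  case True then show ?thesis by simp
next
  case False
  have "absv x * absv (inverse x) = 1" using mult[of x "inverse x"] False by simp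
  then show ?thesis by (rule inverse_unique[symmetric])
qed
lemma abs_divide: "absv (x / y) = absv x / absv y"
  by (simp add: divide_inverse mult abs_inverse)
lemma abs_power: "absv (x ^ n) = absv x ^ n"
  by (induction n) (simp_all add: mult)
lemma abs_diff: "absv (x - y) \<le> max (absv x) (absv y)"
  using ultra[of x "-y"] by simp
lemma ultra_eq: "absv y < absv x \<Longrightarrow> absv (x + y) = absv x"
proof -
  assume a: "absv y < absv x"
  have 1: "absv (x + y) \<le> absv x" using ultra[of x y] a by simp
  have "absv x \<le> max (absv (x + y)) (absv y)" using ultra[of "x+y" "-y"] by simp
  then have "absv x \<le> absv (x + y)" using a by linarith
  then show ?thesis using 1 by simp
qed
lemma ultra_le: "absv x \<le> B \<Longrightarrow> absv y \<le> B \<Longrightarrow> absv (x + y) \<le> B"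
  using ultra[of x y] by simp
lemma ultra_le_diff: "absv x \<le> B \<Longrightarrow> absv y \<le> B \<Longrightarrow> absv (x - y) \<le> B"
  using ultra_le[of x B "-y"] by simp
lemma sum_le: "finite S \<Longrightarrow> 0 \<le> B \<Longrightarrow> (\<And>i. i \<in> S \<Longrightarrow> absv (f i) \<le> B) \<Longrightarrow> absv (sum f S) \<le> B"
  by (induction S rule: finite_induct) (auto intro!: ultra_le)

lemma abs_nat: "absv (of_nat n) \<le> 1"
  by (induction n) (auto intro!: ultra_le)
lemma abs_int: "absv (of_int n) \<le> 1"
  by (cases n rule: int_cases) (simp_all add: abs_nat del: of_nat_Suc)

lemma abs_p: "absv (of_nat p) = inverse (real p)"
proof -
  have "(of_nat p :: 'a) = of_rat (of_nat p)" by simp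
  then have "absv (of_nat p) = padic_abs_rat p (of_nat p)" using rat by metis
  also have "\<dots> = inverse (real p)"
  proof -
    have e: "(of_nat p :: rat) = of_int (int p)" by simp
    have q: "quotient_of (of_nat p :: rat) = (int p, 1)"
      unfolding e using quotient_of_int[of "int p"] by (simp add: Rat.of_int_def)
    have "multiplicity (int p) (int p) = 1"
      using prime by (intro multiplicity_self) (auto simp: prime_gt_0_nat)
    then have "padic_val_rat p (of_nat p) = 1"
      unfolding padic_val_rat_def q by simp
    then show ?thesis unfolding padic_abs_rat_def using prime p_pos
      by (simp add: powr_minus prime_gt_0_nat)
  qed
  finally show ?thesis .
qed

lemma abs_coprime: assumes "\<not> int p dvd n" shows "absv (of_int n) = 1"
proof -
  have "coprime (int p) n" using assms prime
    by (simp add: prime_imp_coprime prime_nat_iff_prime)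
  then obtain u v where uv: "u * int p + v * n = 1"
    by (metis bezout_int coprime_iff_gcd_eq_1)
  have "(1::real) = absv (of_int (u * int p + v * n))" using uv by simp
  also have "\<dots> \<le> max (absv (of_int u * of_nat p)) (absv (of_int v * of_int n))"
    using ultra by simp
  also have "\<dots> \<le> max (inverse (real p)) (absv (of_int n))"
  proof (rule max.mono)
    have "absv (of_int u * of_nat p :: 'a) = absv (of_int u :: 'a) * inverse (real p)"
      by (simp add: mult abs_p)
    also have "\<dots> \<le> 1 * inverse (real p)"
      using abs_int[of u] p_pos by (intro mult_right_mono) auto
    finally show "absv (of_int u * of_nat p :: 'a) \<le> inverse (real p)" by simp
    have "absv (of_int v * of_int n :: 'a) = absv (of_int v :: 'a) * absv (of_int n :: 'a)"
      by (simp add: mult)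
    also have "\<dots> \<le> 1 * absv (of_int n :: 'a)"
      using abs_int[of v] by (intro mult_right_mono) auto
    finally show "absv (of_int v * of_int n :: 'a) \<le> absv (of_int n :: 'a)" by simp
  qed
  finally have "1 \<le> max (inverse (real p)) (absv (of_int n))" .
  moreover have "inverse (real p) < 1" using p_gt1 inverse_less_1_iff[of "real p"] by blast
  ultimately have "1 \<le> absv (of_int n)" by linarith
  then show ?thesis using abs_int[of n] by simp
qed

lemma abs_lt1_dvd: "absv (of_int n) < 1 \<Longrightarrow> int p dvd n"
  using abs_coprime by fastforce

lemma abs_pow_dvd: "absv (of_int d) \<le> inverse (real p ^ k) \<Longrightarrow> int p ^ k dvd d"
proof (induction k arbitrary: d)
  case 0 then show ?case by simp
next
  case (Suc k)
  have "1 < real p ^ Suc k" using p_gt1 one_less_power by blast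
  then have "inverse (real p ^ Suc k) < 1" using inverse_less_1_iff[of "real p ^ Suc k"] by blast
  then have "absv (of_int d) < 1" using Suc.prems by linarith
  then obtain d' where d: "d = int p * d'" using abs_lt1_dvd by (metis dvdE)
  have "absv (of_int d) = inverse (real p) * absv (of_int d')"
    using d by (simp add: mult abs_p)
  then have "inverse (real p) * absv (of_int d') \<le> inverse (real p) * inverse (real p ^ k)"
    using Suc.prems by simp
  then have "absv (of_int d') \<le> inverse (real p ^ k)" using p_pos
    by (simp add: mult_le_cancel_left)
  then have "int p ^ k dvd d'" using Suc.IH by blast
  then show ?case using d by simp
qed

lemma sep: assumes "j < p ^ n" "j' < p ^ n" "j \<noteq> j'"
  shows "absv (of_nat j - of_nat j') > inverse (real p ^ n)"
proof (rule ccontr)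
  assume "\<not> ?thesis"
  then have "absv (of_int (int j - int j')) \<le> inverse (real p ^ n)" by simp
  then have dv: "int p ^ n dvd (int j - int j')" by (rule abs_pow_dvd)
  have "int j < int p ^ n" "int j' < int p ^ n" using assms(1,2) by (metis of_nat_less_iff of_nat_power)+
  then have "\<bar>int j - int j'\<bar> < int p ^ n" by linarith
  moreover have "int j - int j' \<noteq> 0 \<Longrightarrow> \<bar>int p ^ n\<bar> \<le> \<bar>int j - int j'\<bar>"
    using dv dvd_imp_le_int by blast
  ultimately have "int j - int j' = 0" by auto
  then show False using assms by simp
qed

lemma rep: assumes y: "absv y \<le> 1"
  shows "\<exists>j < p ^ n. absv (y - of_nat j) \<le> inverse (real p ^ n)"
proof -
  have pn: "inverse (real p ^ n) > 0" using p_pos by simp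
  obtain q where q: "absv (y - of_rat q) < inverse (real p ^ n)" using dense[OF pn] by blast
  have "1 \<le> real p ^ n" using p_gt1 one_le_power by (metis less_imp_le)
  then have pn1: "inverse (real p ^ n) \<le> 1" by (simp add: inverse_le_1_iff)
  have q1: "absv (of_rat q :: 'a) \<le> 1"
    using abs_diff[of y "y - of_rat q"] q y pn1 by simp
  obtain a b where ab: "quotient_of q = (a, b)" by (cases "quotient_of q") auto
  have bpos: "b > 0" using ab quotient_of_denom_pos by blast
  have cop: "coprime a b" using ab quotient_of_coprime by blast
  have qab: "q = of_int a / of_int b" using ab quotient_of_div by blast
  have oq: "(of_rat q :: 'a) = of_int a / of_int b" using qab by (simp add: of_rat_divide)
  have b0: "(of_int b :: 'a) \<noteq> 0" using bpos by simp
  have npb: "\<not> int p dvd b"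
  proof
    assume pb: "int p dvd b"
    have "\<not> int p dvd a"
    proof
      assume "int p dvd a"
      then have "int p dvd gcd a b" using pb by simp
      moreover have "gcd a b = 1" using cop by simp
      ultimately have "int p dvd 1" by simp
      then have "p = 1" by simp
      then show False using prime by simp
    qed
    then have a1: "absv (of_int a :: 'a) = 1" by (rule abs_coprime)
    obtain b' where b': "b = int p * b'" using pb by (metis dvdE)
    have "absv (of_int b :: 'a) = inverse (real p) * absv (of_int b' :: 'a)"
      using b' by (simp add: mult abs_p)
    also have "\<dots> \<le> inverse (real p)" using abs_int[of b'] p_pos
      by (simp add: mult_left_le)
    finally have bl: "absv (of_int b :: 'a) \<le> inverse (real p)" .
    have bpos': "absv (of_int b :: 'a) > 0" using b0 by (simp add: less_le)
    have "absv (of_rat q :: 'a) = 1 / absv (of_int b :: 'a)" using oq a1 by (simp add: abs_divide)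
    also have "\<dots> \<ge> real p"
    proof -
      have "real p * absv (of_int b :: 'a) \<le> real p * inverse (real p)"
        using bl p_pos by (intro mult_left_mono) auto
      then have "real p * absv (of_int b :: 'a) \<le> 1" using p_pos by simp
      then show ?thesis using bpos' by (simp add: le_divide_eq)
    qed
    finally have "absv (of_rat q :: 'a) \<ge> real p" .
    then show False using q1 p_gt1 by linarith
  qed
  then have b1: "absv (of_int b :: 'a) = 1" by (rule abs_coprime)
  have pi: "prime (int p)" using prime by simp
  have "coprime b (int p)" using prime_imp_coprime[OF pi npb] by (simp add: coprime_commute)
  then have "coprime b (int p ^ n)" by simp
  then obtain s t where st: "s * b + t * int p ^ n = 1"
    by (metis bezout_int coprime_iff_gcd_eq_1)
  define j0 where "j0 = a * s"
  define j where "j = nat (j0 mod (int p ^ n))"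
  define k' where "k' = j0 div (int p ^ n)"
  have ppos: "int p ^ n > 0" using prime prime_gt_0_nat by simp
  have jj: "int j = j0 mod (int p ^ n)" unfolding j_def using ppos by simp
  have "j0 mod (int p ^ n) < int p ^ n" using ppos by simp
  then have "int j < int (p ^ n)" using jj by simp
  then have jlt: "j < p ^ n" by linarith
  have j0e: "j0 = int j + int p ^ n * k'" unfolding k'_def jj by simp
  have key: "a - int j * b = int p ^ n * (a * t + k' * b)"
  proof -
    have "a - int j * b = a - (j0 - int p ^ n * k') * b" using j0e by simp
    also have "\<dots> = a * (1 - s * b) + int p ^ n * k' * b" unfolding j0_def by (simp add: algebra_simps)
    also have "\<dots> = a * (t * int p ^ n) + int p ^ n * k' * b"
    proof -
      have st': "1 - s * b = t * int p ^ n" using st by linarith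
      show ?thesis by (simp only: st')
    qed
    finally show ?thesis by (simp add: algebra_simps)
  qed
  have "(of_rat q :: 'a) - of_nat j = of_int (a - int j * b) / of_int b"
    using oq b0 by (simp add: field_simps)
  also have "\<dots> = of_nat p ^ n * of_int (a * t + k' * b) / of_int b"
    unfolding key by simp
  finally have "absv ((of_rat q :: 'a) - of_nat j) = inverse (real p) ^ n * absv (of_int (a * t + k' * b) :: 'a)"
    using b1 by (simp add: abs_divide mult abs_power abs_p)
  also have "\<dots> \<le> inverse (real p ^ n)"
    using abs_int[of "a * t + k' * b"] p_pos by (simp add: power_inverse mult_left_le)
  finally have qj: "absv ((of_rat q :: 'a) - of_nat j) \<le> inverse (real p ^ n)" .
  have "absv (y - of_nat j) = absv ((y - of_rat q) + (of_rat q - of_nat j))" by simp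
  also have "\<dots> \<le> inverse (real p ^ n)" using q qj by (intro ultra_le) auto
  finally show ?thesis using jlt by blast
qed

lemma abs_values: assumes "x \<noteq> 0" shows "\<exists>k::int. absv x = real p powr real_of_int k"
proof -
  have "absv x > 0" using assms by (simp add: less_le)
  then obtain q where q: "absv (x - of_rat q) < absv x" using dense by blast
  have e: "absv (of_rat q :: 'a) = absv x"
    using ultra_eq[OF q[unfolded abs_uminus[symmetric, of "x - of_rat q"]]] by simp
  then have "q \<noteq> 0" using assms by auto
  then have "absv (of_rat q :: 'a) = real p powr real_of_int (- padic_val_rat p q)"
    by (simp add: rat padic_abs_rat_def)
  then show ?thesis using e by metis
qed

lemma rat_values: assumes "c \<noteq> 0" shows "\<exists>k::int. padic_abs_rat p c = real p powr real_of_int k"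
  using assms by (simp add: padic_abs_rat_def) (metis of_int_minus)


end


context qp begin

definition pball :: "'a \<Rightarrow> int \<Rightarrow> 'a set" where
  "pball x k = {y. absv (y - x) \<le> real p powr real_of_int k}"

lemma powr_neg_nat: "real p powr real_of_int (- int n) = inverse (real p ^ n)"
  using p_pos by (simp add: powr_minus powr_realpow)
lemma powr_nat: "real p powr real_of_int (int n) = real p ^ n"
  using p_pos by (simp add: powr_realpow)

lemma pball_translate: "(\<lambda>y. t + y) ` pball 0 k = pball t k"
proof -
  have "\<And>y. y \<in> pball t k \<Longrightarrow> y \<in> (\<lambda>y. t + y) ` pball 0 k"
  proof -
    fix y assume "y \<in> pball t k"
    then have "y - t \<in> pball 0 k" unfolding pball_def by simp
    then show "y \<in> (\<lambda>y. t + y) ` pball 0 k" by (rule rev_image_eqI) simp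
  qed
  then show ?thesis unfolding pball_def by auto
qed

lemma pball_0_nat: "pball 0 (-int n) = {y. absv y \<le> inverse (real p ^ n)}"
  unfolding pball_def powr_neg_nat by simp

lemma pball_0_natp: "pball 0 (int n) = {y. absv y \<le> real p ^ n}"
  unfolding pball_def powr_nat by simp

lemma translates_measure:
  fixes M :: "'a measure" and t :: "nat \<Rightarrow> 'a"
  assumes inv: "\<And>s A. A \<in> sets M \<Longrightarrow> emeasure M ((\<lambda>y. s + y) ` A) = emeasure M A"
    and tr: "\<And>s. (\<lambda>y. s + y) ` B \<in> sets M" and B: "B \<in> sets M"
    and disj: "\<And>i j. i < N \<Longrightarrow> j < N \<Longrightarrow> i \<noteq> j \<Longrightarrow> ((\<lambda>y. t i + y) ` B) \<inter> ((\<lambda>y. t j + y) ` B) = {}"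
    and A: "A = (\<Union>i<N. (\<lambda>y. t i + y) ` B)"
  shows "emeasure M A = of_nat N * emeasure M B"
proof -
  have "emeasure M A = (\<Sum>i<N. emeasure M ((\<lambda>y. t i + y) ` B))"
    unfolding A
    by (rule sum_emeasure[symmetric]) (use tr disj in \<open>auto simp: disjoint_family_on_def\<close>)
  also have "\<dots> = (\<Sum>i<N. emeasure M B)" using inv[OF B] by simp
  finally show ?thesis by simp
qed

end

locale qpm = qp p absv for p :: nat and absv :: "'a::field_char_0 \<Rightarrow> real" +
  fixes dx :: "'a measure"
  assumes haar: "haar_Qp p absv dx"
begin

lemma space_dx[simp]: "space dx = UNIV" using haar unfolding haar_Qp_def by blast
lemma sets_dx: "sets dx = sigma_sets UNIV (Qp_balls p absv)" using haar unfolding haar_Qp_def by blast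
lemma inv_dx: "A \<in> sets dx \<Longrightarrow> emeasure dx ((\<lambda>y. t + y) ` A) = emeasure dx A"
  using haar unfolding haar_Qp_def by blast
lemma Zp_dx: "emeasure dx {y. absv y \<le> 1} = 1" using haar unfolding haar_Qp_def by blast

lemma pball_sets[simp]: "pball x k \<in> sets dx"
proof -
  have "pball x k \<in> Qp_balls p absv" unfolding Qp_balls_def pball_def
    by (rule CollectI, rule exI[of _ x], rule exI[of _ "-k"]) simp
  then show ?thesis unfolding sets_dx by (rule sigma_sets.Basic)
qed

lemma pball_0_0: "pball 0 0 = {y. absv y \<le> 1}" unfolding pball_def using p_pos by simp

lemma measure_small: "emeasure dx (pball 0 (- int n)) = ennreal (inverse (real p ^ n))"
proof -
  define B where "B = pball 0 (- int n)"
  have "emeasure dx (pball 0 0) = of_nat (p ^ n) * emeasure dx B"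
  proof (rule translates_measure[where t = "\<lambda>j. of_nat j"])
    show "A \<in> sets dx \<Longrightarrow> emeasure dx ((\<lambda>y. s + y) ` A) = emeasure dx A" for s A by (rule inv_dx)
    show "(\<lambda>y. s + y) ` B \<in> sets dx" for s unfolding B_def pball_translate by simp
    show "B \<in> sets dx" unfolding B_def by simp
    show "((\<lambda>y. of_nat i + y) ` B) \<inter> ((\<lambda>y. of_nat j + y) ` B) = {}"
      if "i < p ^ n" "j < p ^ n" "i \<noteq> j" for i j
    proof (rule ccontr)
      assume "\<not> ?thesis"
      then obtain z where "z \<in> pball (of_nat i) (- int n)" "z \<in> pball (of_nat j) (- int n)"
        unfolding B_def pball_translate by blast
      then have "absv (z - of_nat i) \<le> inverse (real p ^ n)" "absv (z - of_nat j) \<le> inverse (real p ^ n)"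
        unfolding pball_def powr_neg_nat by auto
      then have "absv ((z - of_nat j) - (z - of_nat i)) \<le> inverse (real p ^ n)"
        by (rule ultra_le_diff[rotated])
      then have "absv (of_nat i - of_nat j :: 'a) \<le> inverse (real p ^ n)" by simp
      then show False using sep[OF that] by linarith
    qed
    show "pball 0 0 = (\<Union>i<p ^ n. (\<lambda>y. of_nat i + y) ` B)"
    proof
      show "pball 0 0 \<subseteq> (\<Union>i<p ^ n. (\<lambda>y. of_nat i + y) ` B)"
      proof
        fix y assume "y \<in> pball 0 0"
        then have "absv y \<le> 1" unfolding pball_0_0 by simp
        then obtain j where j: "j < p ^ n" "absv (y - of_nat j) \<le> inverse (real p ^ n)"
          using rep by blast
        then have "y \<in> pball (of_nat j) (- int n)" unfolding pball_def powr_neg_nat by simp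
        then show "y \<in> (\<Union>i<p ^ n. (\<lambda>y. of_nat i + y) ` B)"
          using j(1) unfolding B_def pball_translate by blast
      qed
      show "(\<Union>i<p ^ n. (\<lambda>y. of_nat i + y) ` B) \<subseteq> pball 0 0"
      proof
        fix y assume "y \<in> (\<Union>i<p ^ n. (\<lambda>y. of_nat i + y) ` B)"
        then obtain i where "y \<in> pball (of_nat i) (- int n)"
          unfolding B_def pball_translate by blast
        then have "absv (y - of_nat i) \<le> inverse (real p ^ n)" unfolding pball_def powr_neg_nat by simp
        moreover have "inverse (real p ^ n) \<le> 1"
          using p_gt1 one_le_power[of "real p" n] inverse_le_1_iff by fastforce
        ultimately have "absv (y - of_nat i) \<le> 1" by linarith
        then have "absv ((y - of_nat i) + of_nat i) \<le> 1" using abs_nat by (intro ultra_le)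
        then show "y \<in> pball 0 0" unfolding pball_0_0 by simp
      qed
    qed
  qed
  then have "1 = of_nat (p ^ n) * emeasure dx B" using Zp_dx unfolding pball_0_0 by simp
  then have e: "ennreal (real p ^ n) * emeasure dx B = 1" by (simp add: ennreal_of_nat_eq_real_of_nat)
  have pn: "real p ^ n > 0" using p_pos by simp
  have "emeasure dx B = ennreal (inverse (real p ^ n)) * (ennreal (real p ^ n) * emeasure dx B)"
    using pn by (simp add: ennreal_mult[symmetric] mult.assoc[symmetric])
  then show ?thesis using e unfolding B_def by simp
qed

lemma measure_large: "emeasure dx (pball 0 (int k)) = ennreal (real p ^ k)"
proof -
  define B where "B = pball 0 0"
  define \<pi> where "\<pi> = (of_nat p :: 'a)"
  have pi0: "\<pi> \<noteq> 0" unfolding \<pi>_def using p_pos by simp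
  have api: "absv (\<pi> ^ k) = inverse (real p ^ k)" unfolding \<pi>_def by (simp add: abs_power abs_p power_inverse)
  have pk: "real p ^ k > 0" using p_pos by simp
  have "emeasure dx (pball 0 (int k)) = of_nat (p ^ k) * emeasure dx B"
  proof (rule translates_measure[where t = "\<lambda>j. of_nat j / \<pi> ^ k"])
    show "A \<in> sets dx \<Longrightarrow> emeasure dx ((\<lambda>y. s + y) ` A) = emeasure dx A" for s A by (rule inv_dx)
    show "(\<lambda>y. s + y) ` B \<in> sets dx" for s unfolding B_def pball_translate by simp
    show "B \<in> sets dx" unfolding B_def by simp
    show "((\<lambda>y. of_nat i / \<pi> ^ k + y) ` B) \<inter> ((\<lambda>y. of_nat j / \<pi> ^ k + y) ` B) = {}"
      if "i < p ^ k" "j < p ^ k" "i \<noteq> j" for i j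
    proof (rule ccontr)
      assume "\<not> ?thesis"
      then obtain z where "z \<in> pball (of_nat i / \<pi> ^ k) 0" "z \<in> pball (of_nat j / \<pi> ^ k) 0"
        unfolding B_def pball_translate by blast
      then have "absv (z - of_nat i / \<pi> ^ k) \<le> 1" "absv (z - of_nat j / \<pi> ^ k) \<le> 1"
        unfolding pball_def using p_pos by auto
      then have "absv ((z - of_nat j / \<pi> ^ k) - (z - of_nat i / \<pi> ^ k)) \<le> 1"
        by (rule ultra_le_diff[rotated])
      then have "absv ((of_nat i - of_nat j) / \<pi> ^ k) \<le> 1" by (simp add: diff_divide_distrib)
      then have "absv (of_nat i - of_nat j :: 'a) \<le> inverse (real p ^ k)"
        using api pk by (simp add: abs_divide)
      then show False using sep[OF that] by linarith
    qed
    show "pball 0 (int k) = (\<Union>i<p ^ k. (\<lambda>y. of_nat i / \<pi> ^ k + y) ` B)"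
    proof
      show "pball 0 (int k) \<subseteq> (\<Union>i<p ^ k. (\<lambda>y. of_nat i / \<pi> ^ k + y) ` B)"
      proof
        fix y assume "y \<in> pball 0 (int k)"
        then have "absv y \<le> real p ^ k" unfolding pball_0_natp by simp
        then have "inverse (real p ^ k) * absv y \<le> inverse (real p ^ k) * real p ^ k"
          using pk by (intro mult_left_mono) auto
        then have "absv (\<pi> ^ k * y) \<le> 1" using api pk by (simp add: mult)
        then obtain j where j: "j < p ^ k" "absv (\<pi> ^ k * y - of_nat j) \<le> inverse (real p ^ k)"
          using rep by blast
        have "y - of_nat j / \<pi> ^ k = (\<pi> ^ k * y - of_nat j) / \<pi> ^ k" using pi0 by (simp add: field_simps)
        then have "absv (y - of_nat j / \<pi> ^ k) = absv (\<pi> ^ k * y - of_nat j) * real p ^ k"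
          using api pk by (simp add: divide_inverse mult abs_inverse)
        also have "\<dots> \<le> inverse (real p ^ k) * real p ^ k" using j(2) pk by (intro mult_right_mono) auto
        finally have "absv (y - of_nat j / \<pi> ^ k) \<le> 1" using pk by simp
        then have "y \<in> pball (of_nat j / \<pi> ^ k) 0" unfolding pball_def using p_pos by simp
        then show "y \<in> (\<Union>i<p ^ k. (\<lambda>y. of_nat i / \<pi> ^ k + y) ` B)"
          using j(1) unfolding B_def pball_translate by blast
      qed
      show "(\<Union>i<p ^ k. (\<lambda>y. of_nat i / \<pi> ^ k + y) ` B) \<subseteq> pball 0 (int k)"
      proof
        fix y assume "y \<in> (\<Union>i<p ^ k. (\<lambda>y. of_nat i / \<pi> ^ k + y) ` B)"
        then obtain i where "y \<in> pball (of_nat i / \<pi> ^ k) 0"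
          unfolding B_def pball_translate by blast
        then have y1: "absv (y - of_nat i / \<pi> ^ k) \<le> 1" unfolding pball_def using p_pos by simp
        have "1 \<le> real p ^ k" using p_gt1 one_le_power[of "real p" k] by simp
        then have a1: "absv (y - of_nat i / \<pi> ^ k) \<le> real p ^ k" using y1 by linarith
        have "absv (of_nat i / \<pi> ^ k) = absv (of_nat i :: 'a) * real p ^ k"
          using api pk by (simp add: divide_inverse mult abs_inverse)
        also have "\<dots> \<le> 1 * real p ^ k" using abs_nat[of i] pk by (intro mult_right_mono) auto
        finally have a2: "absv (of_nat i / \<pi> ^ k) \<le> real p ^ k" by simp
        have "absv ((y - of_nat i / \<pi> ^ k) + of_nat i / \<pi> ^ k) \<le> real p ^ k"
          using a1 a2 by (rule ultra_le)
        then show "y \<in> pball 0 (int k)" unfolding pball_0_natp by simp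
      qed
    qed
  qed
  also have "\<dots> = ennreal (real p ^ k)" unfolding B_def pball_0_0 Zp_dx
    by (simp add: ennreal_of_nat_eq_real_of_nat)
  finally show ?thesis .
qed

lemma measure_ball: "emeasure dx (pball 0 e) = ennreal (real p powr real_of_int e)"
proof (cases "e \<ge> 0")
  case True
  then obtain k where "e = int k" by (metis nonneg_eq_int)
  then show ?thesis using measure_large powr_nat by simp
next
  case False
  then obtain n where "e = - int n" by (metis nonpos_int_cases not_le less_imp_le)
  then show ?thesis using measure_small powr_neg_nat by simp
qed

definition sph :: "int \<Rightarrow> 'a set" where "sph e = {y. absv y = real p powr real_of_int e}"

lemma powr_mono_iff: "real p powr real_of_int a \<le> real p powr real_of_int b \<longleftrightarrow> a \<le> b"
  using p_gt1 by simp
lemma powr_less_iff: "real p powr real_of_int a < real p powr real_of_int b \<longleftrightarrow> a < b"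
  using p_gt1 by simp

lemma sph_diff: "sph e = pball 0 e - pball 0 (e - 1)"
proof
  show "sph e \<subseteq> pball 0 e - pball 0 (e - 1)"
    unfolding sph_def pball_def using powr_less_iff[of "e-1" e] by auto
  show "pball 0 e - pball 0 (e - 1) \<subseteq> sph e"
  proof
    fix y assume y: "y \<in> pball 0 e - pball 0 (e - 1)"
    then have y1: "absv y \<le> real p powr real_of_int e" "\<not> absv y \<le> real p powr real_of_int (e - 1)"
      unfolding pball_def by auto
    then have "y \<noteq> 0" using p_pos by auto
    then obtain k where k: "absv y = real p powr real_of_int k" using abs_values by blast
    then have "k \<le> e" "\<not> k \<le> e - 1" using y1 powr_mono_iff[of k e] powr_mono_iff[of k "e-1"] by (auto simp del: of_int_diff)
    then have "k = e" by simp
    then show "y \<in> sph e" unfolding sph_def using k by simp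
  qed
qed

lemma sph_sets[simp, measurable]: "sph e \<in> sets dx" unfolding sph_diff by (intro sets.Diff) simp_all

lemma measure_sph: "emeasure dx (sph e) = ennreal (real p powr real_of_int e - real p powr real_of_int (e - 1))"
proof -
  have "pball 0 (e - 1) \<subseteq> pball 0 e" unfolding pball_def using powr_mono_iff[of "e-1" e] by auto
  then have "emeasure dx (sph e) = emeasure dx (pball 0 e) - emeasure dx (pball 0 (e - 1))"
    unfolding sph_diff by (intro emeasure_Diff) (auto simp: measure_ball)
  then show ?thesis by (simp add: measure_ball ennreal_minus)
qed

lemma int_sph: "(\<integral>\<^sup>+ y. ennreal (indicator (sph e) y * absv y) \<partial>dx)
     = ennreal (real p powr real_of_int e * (real p powr real_of_int e - real p powr real_of_int (e - 1)))"
proof -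
  have "(\<integral>\<^sup>+ y. ennreal (indicator (sph e) y * absv y) \<partial>dx)
       = (\<integral>\<^sup>+ y. ennreal (real p powr real_of_int e) * indicator (sph e) y \<partial>dx)"
    by (intro nn_integral_cong) (auto simp: indicator_def sph_def)
  also have "\<dots> = ennreal (real p powr real_of_int e) * emeasure dx (sph e)"
    by (simp add: nn_integral_cmult_indicator)
  also have "\<dots> = ennreal (real p powr real_of_int e * (real p powr real_of_int e - real p powr real_of_int (e - 1)))"
    unfolding measure_sph using powr_mono_iff[of "e-1" e] by (simp add: ennreal_mult)
  finally show ?thesis .
qed

lemma powr_shift: "real p powr real_of_int (e - int i) = real p powr real_of_int e / real p ^ i"
proof -
  have "real p powr real_of_int (e - int i) = real p powr (real_of_int e - real i)" by simp
  also have "\<dots> = real p powr real_of_int e / real p powr real i" by (rule powr_diff)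
  also have "real p powr real i = real p ^ i" using p_pos by (rule powr_realpow)
  finally show ?thesis .
qed
lemma powr_shift1: "real p powr real_of_int (e - int i - 1) = real p powr real_of_int e / real p ^ i / real p"
proof -
  have "real p powr real_of_int (e - int i - 1) = real p powr (real_of_int (e - int i) - 1)" by simp
  also have "\<dots> = real p powr real_of_int (e - int i) / real p powr 1" by (rule powr_diff)
  also have "\<dots> = real p powr real_of_int e / real p ^ i / real p" unfolding powr_shift using p_pos by simp
  finally show ?thesis .
qed

lemma invp1: "inverse (real p) < 1" using p_gt1 inverse_less_1_iff[of "real p"] by blast

lemma invp2: "inverse (real p ^ 2) < 1" "inverse (real p ^ 2) > 0"
proof -
  have "1 < real p ^ 2" using p_gt1 one_less_power[of "real p" 2] by simp
  then show "inverse (real p ^ 2) < 1" using inverse_less_1_iff[of "real p ^ 2"] by blast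
  show "inverse (real p ^ 2) > 0" using p_pos by simp
qed

lemma pw_lemma:
  fixes e :: int
  defines "f \<equiv> \<lambda>i y. ennreal (real p powr real_of_int (e - int i)) * indicator (sph (e - int i)) y"
  shows "ennreal (indicator (pball 0 e) y * absv y) = (\<Sum>i. f i y)"
proof (cases "y \<in> pball 0 e \<and> y \<noteq> 0")
  case True
  then obtain k where k: "absv y = real p powr real_of_int k" using abs_values by blast
  have "real p powr real_of_int k \<le> real p powr real_of_int e" using True k unfolding pball_def by auto
  then have ke: "k \<le> e" using powr_mono_iff by blast
  define i0 where "i0 = nat (e - k)"
  have fi: "f i y = (if i = i0 then ennreal (absv y) else 0)" for i
  proof -
    have "y \<in> sph (e - int i) \<longleftrightarrow> real p powr real_of_int k = real p powr real_of_int (e - int i)"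
      using k by (simp add: sph_def)
    also have "\<dots> \<longleftrightarrow> k = e - int i" using p_gt1 powr_inj[of "real p" "real_of_int k" "real_of_int (e - int i)"]
      by (simp del: of_int_diff)
    also have "\<dots> \<longleftrightarrow> i = i0" unfolding i0_def using ke by auto
    finally have "y \<in> sph (e - int i) \<longleftrightarrow> i = i0" .
    moreover have "i = i0 \<Longrightarrow> real p powr real_of_int (e - int i) = absv y"
      unfolding k i0_def using ke by simp
    ultimately show ?thesis unfolding f_def by (auto simp: indicator_def)
  qed
  have "(\<lambda>i. f i y) sums ennreal (absv y)"
    unfolding fi by (rule sums_single)
  then have "(\<Sum>i. f i y) = ennreal (absv y)" by (rule sums_unique[symmetric])
  then show ?thesis using True by (simp add: indicator_def)
next
  case False
  have "f i y = 0" for i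
  proof -
    have "y \<notin> sph (e - int i)"
    proof
      assume y: "y \<in> sph (e - int i)"
      then have a: "absv y = real p powr real_of_int (e - int i)" unfolding sph_def by simp
      then have "y \<noteq> 0" using p_pos by auto
      moreover have "real p powr real_of_int (e - int i) \<le> real p powr real_of_int e"
        using powr_mono_iff[of "e - int i" e] by simp
      then have "y \<in> pball 0 e" using a unfolding pball_def by simp
      ultimately show False using False by blast
    qed
    then show ?thesis unfolding f_def by simp
  qed
  then have "(\<Sum>i. f i y) = 0" by simp
  moreover have "indicator (pball 0 e) y * absv y = 0" using False by (auto simp: indicator_def)
  ultimately show ?thesis by simp
qed
lemma int_ball: "(\<integral>\<^sup>+ y. ennreal (indicator (pball 0 e) y * absv y) \<partial>dx)
     = ennreal ((real p powr real_of_int e)^2 * (1 - inverse (real p)) / (1 - inverse (real p ^ 2)))"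
proof -
  define P where "P = real p powr real_of_int e"
  have Ppos: "P > 0" unfolding P_def using p_pos by simp
  define f where "f i y = ennreal (real p powr real_of_int (e - int i)) * indicator (sph (e - int i)) y" for i y
  have pw: "ennreal (indicator (pball 0 e) y * absv y) = (\<Sum>i. f i y)" for y
    unfolding f_def by (rule pw_lemma)
  have "(\<integral>\<^sup>+ y. ennreal (indicator (pball 0 e) y * absv y) \<partial>dx) = (\<integral>\<^sup>+ y. (\<Sum>i. f i y) \<partial>dx)"
    by (rule nn_integral_cong) (rule pw)
  also have "\<dots> = (\<Sum>i. integral\<^sup>N dx (f i))"
    by (rule nn_integral_suminf) (unfold f_def, measurable)
  also have "\<dots> = (\<Sum>i. ennreal (P^2 * (1 - inverse (real p)) * (inverse (real p ^ 2)) ^ i))"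
  proof (rule suminf_cong)
    fix i
    have "integral\<^sup>N dx (f i) = ennreal (real p powr real_of_int (e - int i)) * emeasure dx (sph (e - int i))"
      unfolding f_def by (simp add: nn_integral_cmult_indicator)
    also have "\<dots> = ennreal (P / real p ^ i * (P / real p ^ i - P / real p ^ i / real p))"
    proof -
      have nn1: "0 \<le> P / real p ^ i" using Ppos p_pos by simp
      have "P / real p ^ i / real p \<le> P / real p ^ i"
        using nn1 p_gt1 Ppos by (simp add: divide_le_eq mult_le_cancel_left1)
      then have nn2: "0 \<le> P / real p ^ i - P / real p ^ i / real p" by simp
      show ?thesis unfolding measure_sph powr_shift powr_shift1 P_def[symmetric]
        by (rule ennreal_mult[OF nn1 nn2, symmetric])
    qed
    also have "P / real p ^ i * (P / real p ^ i - P / real p ^ i / real p) = P^2 * (1 - inverse (real p)) * (inverse (real p ^ 2)) ^ i"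
    proof -
      have pi: "real p ^ i > 0" using p_pos by simp
      have e2: "(inverse (real p ^ 2)) ^ i = inverse (real p ^ i * real p ^ i)"
        by (simp add: power_inverse power2_eq_square power_mult_distrib)
      show ?thesis unfolding e2 using pi p_pos by (simp add: field_simps power2_eq_square)
    qed
    finally show "integral\<^sup>N dx (f i) = ennreal (P^2 * (1 - inverse (real p)) * (inverse (real p ^ 2)) ^ i)" .
  qed
  also have "\<dots> = ennreal (\<Sum>i. P^2 * (1 - inverse (real p)) * (inverse (real p ^ 2)) ^ i)"
  proof (rule suminf_ennreal2)
    show "0 \<le> P^2 * (1 - inverse (real p)) * (inverse (real p ^ 2)) ^ i" for i
      using invp1 invp2 Ppos by (intro mult_nonneg_nonneg zero_le_power) auto
    have "norm (inverse (real p ^ 2)) < 1" using invp2 by simp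
    then show "summable (\<lambda>i. P^2 * (1 - inverse (real p)) * (inverse (real p ^ 2)) ^ i)"
      by (intro summable_mult summable_geometric)
  qed
  also have "(\<Sum>i. P^2 * (1 - inverse (real p)) * (inverse (real p ^ 2)) ^ i) = P^2 * (1 - inverse (real p)) / (1 - inverse (real p ^ 2))"
  proof -
    have n: "norm (inverse (real p ^ 2)) < 1" using invp2 by simp
    have "(\<Sum>i. P^2 * (1 - inverse (real p)) * (inverse (real p ^ 2)) ^ i) = P^2 * (1 - inverse (real p)) * (\<Sum>i. (inverse (real p ^ 2)) ^ i)"
      using summable_geometric[OF n] by (rule suminf_mult)
    also have "\<dots> = P^2 * (1 - inverse (real p)) / (1 - inverse (real p ^ 2))"
      using suminf_geometric[OF n] by simp
    finally show ?thesis .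
  qed
  finally show ?thesis unfolding P_def .
qed

end


lemma if_mult_zero1: "(if P then c else 0) * a = (if P then c * a else (0::'a::semiring_0))" by simp
lemma if_mult_zero2: "a * (if P then c else 0) = (if P then a * c else (0::'a::semiring_0))" by simp

lemma mat_mult_left: "(mat c ** A :: 'a::comm_ring_1^'n::finite^'m::finite) = (\<chi> i j. c * A $ i $ j)"
  by (simp add: vec_eq_iff matrix_matrix_mult_def mat_def if_mult_zero1)

lemma mat_mult_right: "(A ** mat c :: 'a::comm_ring_1^'n::finite^'m::finite) = (\<chi> i j. A $ i $ j * c)"
  by (simp add: vec_eq_iff matrix_matrix_mult_def mat_def if_mult_zero2)

lemma mat_comm: "mat c ** (A :: 'a::comm_ring_1^'n::finite^'n) = A ** mat c"
  by (simp add: mat_mult_left mat_mult_right mult.commute)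

lemma mat_mat: "mat a ** mat b = (mat (a * b) :: 'a::comm_ring_1^'n::finite^'n)"
  by (simp add: mat_mult_left vec_eq_iff) (simp add: mat_def)

lemma mat_pull:
  fixes X Y :: "'a::comm_ring_1^'n::finite^'n"
  shows "X ** (mat a ** Y) = mat a ** (X ** Y)"
proof -
  have "X ** (mat a ** Y) = (X ** mat a) ** Y" by (simp add: matrix_mul_assoc)
  also have "\<dots> = (mat a ** X) ** Y" by (simp only: mat_comm[of a X])
  also have "\<dots> = mat a ** (X ** Y)" by (simp add: matrix_mul_assoc)
  finally show ?thesis .
qed

lemma mat_mat_J: "mat a ** (mat b ** A) = (mat (a * b) ** A :: 'a::comm_ring_1^'n::finite^'n)"
  by (simp add: matrix_mul_assoc mat_mat)

lemma matrix_diff_ldistrib: "(A :: 'a::comm_ring_1^'n::finite^'m::finite) ** (B - C) = A ** B - A ** C"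
  by (simp add: vec_eq_iff matrix_matrix_mult_def right_diff_distrib sum_subtractf)

lemma matrix_diff_rdistrib: "((B - C) :: 'a::comm_ring_1^'n::finite^'m::finite) ** A = B ** A - C ** A"
  by (simp add: vec_eq_iff matrix_matrix_mult_def left_diff_distrib sum_subtractf)

lemma J2: "Jmat ** Jmat = (mat (-1) :: 'a::comm_ring_1 mat4)"
  by (simp add: vec_eq_iff forall_4 sum_4 matrix_matrix_mult_def Jmat_def mat_def)

lemma J_entry: "(mat a ** Jmat :: 'a::comm_ring_1 mat4) $ 0 $ 2 = a"
  by (simp add: mat_mult_left Jmat_def)

lemma mult_J_inj: "mat a ** Jmat = (mat b ** Jmat :: 'a::comm_ring_1 mat4) \<Longrightarrow> a = b"
proof -
  assume h: "mat a ** Jmat = (mat b ** Jmat :: 'a::comm_ring_1 mat4)"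
  have "a = (mat a ** Jmat :: 'a mat4) $ 0 $ 2" by (simp only: J_entry)
  also have "\<dots> = b" unfolding h by (simp only: J_entry)
  finally show ?thesis .
qed

lemma sim_mult:
  fixes A B :: "'a::comm_ring_1 mat4"
  assumes "transpose A ** Jmat ** A = mat a ** Jmat" "transpose B ** Jmat ** B = mat b ** Jmat"
  shows "transpose (A ** B) ** Jmat ** (A ** B) = mat (a * b) ** Jmat"
proof -
  have "transpose (A ** B) ** Jmat ** (A ** B) = transpose B ** (transpose A ** Jmat ** A) ** B"
    by (simp add: matrix_transpose_mul matrix_mul_assoc)
  also have "\<dots> = transpose B ** (mat a ** Jmat) ** B" using assms(1) by simp
  also have "\<dots> = mat a ** (transpose B ** Jmat ** B)"
    by (simp only: mat_pull matrix_mul_assoc[symmetric])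
  also have "\<dots> = mat (a * b) ** Jmat" using assms(2) by (simp add: mat_mat_J)
  finally show ?thesis .
qed


definition kinv :: "'a::field \<Rightarrow> 'a mat4 \<Rightarrow> 'a mat4" where
  "kinv \<mu> k = mat (- inverse \<mu>) ** (Jmat ** transpose k ** Jmat)"

lemma kinv_left:
  fixes k :: "'a::field mat4"
  assumes A: "transpose k ** Jmat ** k = mat \<mu> ** Jmat" and m: "\<mu> \<noteq> 0"
  shows "kinv \<mu> k ** k = mat 1"
proof -
  have 1: "kinv \<mu> k ** k = mat (- inverse \<mu>) ** (Jmat ** (transpose k ** Jmat ** k))"
    unfolding kinv_def by (simp only: matrix_mul_assoc)
  have 2: "Jmat ** (transpose k ** Jmat ** k) = mat \<mu> ** (Jmat ** Jmat)"
    unfolding A by (rule mat_pull)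
  have 3: "mat (- inverse \<mu>) ** (mat \<mu> ** (Jmat ** Jmat)) = (mat (- inverse \<mu> * \<mu> * -1) :: 'a mat4)"
    unfolding J2 mat_mat_J mat_mat by (simp only: mult.assoc)
  have 4: "- inverse \<mu> * \<mu> * -1 = 1" using m by simp
  show ?thesis unfolding 1 2 3 4 ..
qed
lemma kinv_right:
  fixes k :: "'a::field mat4"
  assumes "transpose k ** Jmat ** k = mat \<mu> ** Jmat" "\<mu> \<noteq> 0"
  shows "k ** kinv \<mu> k = mat 1"
  by (rule matrix_left_right_inverse1[OF kinv_left[OF assms]])

lemma matrix_inv_eq:
  fixes k k' :: "'a::field mat4"
  assumes "k ** k' = mat 1" "k' ** k = mat 1"
  shows "matrix_inv k = k'"
proof -
  have ex: "\<exists>A. k ** A = mat 1 \<and> A ** k = mat 1" using assms by blast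
  define A where "A = matrix_inv k"
  have A: "k ** A = mat 1 \<and> A ** k = mat 1" unfolding A_def matrix_inv_def by (rule someI_ex[OF ex])
  have "A = A ** (k ** k')" unfolding assms(1) by (simp only: matrix_mul_rid)
  also have "\<dots> = (A ** k) ** k'" by (simp only: matrix_mul_assoc)
  also have "\<dots> = k'" using A by (simp only: matrix_mul_lid)
  finally show ?thesis unfolding A_def .
qed

lemma kinv_sim:
  fixes k :: "'a::field mat4"
  assumes A: "transpose k ** Jmat ** k = mat \<mu> ** Jmat" and m: "\<mu> \<noteq> 0"
  shows "transpose (kinv \<mu> k) ** Jmat ** kinv \<mu> k = mat (inverse \<mu>) ** Jmat"
proof -
  define X where "X = transpose (kinv \<mu> k) ** Jmat ** kinv \<mu> k"
  have "Jmat = transpose (k ** kinv \<mu> k) ** Jmat ** (k ** kinv \<mu> k)"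
    unfolding kinv_right[OF A m] transpose_mat by (simp only: matrix_mul_lid matrix_mul_rid)
  also have "\<dots> = transpose (kinv \<mu> k) ** (transpose k ** Jmat ** k) ** kinv \<mu> k"
    by (simp only: matrix_transpose_mul matrix_mul_assoc)
  also have "\<dots> = mat \<mu> ** X" unfolding X_def A by (simp only: mat_pull matrix_mul_assoc[symmetric])
  finally have "mat (inverse \<mu>) ** Jmat = mat (inverse \<mu>) ** (mat \<mu> ** X)" by (simp only:)
  also have "\<dots> = mat (inverse \<mu> * \<mu>) ** X" by (rule mat_mat_J)
  also have "\<dots> = X" using m by simp
  finally show ?thesis unfolding X_def by (rule sym)
qed


context qp begin

lemma Kp_iff: "k \<in> Kp absv \<longleftrightarrow> (\<forall>i j. absv (k $ i $ j) \<le> 1) \<and>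
   (\<exists>\<mu>. \<mu> \<noteq> 0 \<and> absv \<mu> \<le> 1 \<and> absv (inverse \<mu>) \<le> 1 \<and> transpose k ** Jmat ** k = mat \<mu> ** Jmat)"
  unfolding Kp_def GSp4_def by simp

lemma mu_unit: assumes "\<mu> \<noteq> 0" "absv \<mu> \<le> 1" "absv (inverse \<mu>) \<le> 1" shows "absv \<mu> = 1"
proof -
  have p: "absv \<mu> > 0" using assms(1) by (simp add: less_le)
  have "inverse (absv \<mu>) \<le> 1" using assms(3) by (simp add: abs_inverse)
  then have "1 \<le> absv \<mu>" using p by (simp add: inverse_le_1_iff)
  then show ?thesis using assms(2) by simp
qed

lemma norm_mult:
  fixes A B :: "'a mat4"
  assumes "\<And>i j. absv (A $ i $ j) \<le> \<alpha>" "\<And>i j. absv (B $ i $ j) \<le> \<beta>"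
  shows "absv ((A ** B) $ i $ j) \<le> \<alpha> * \<beta>"
proof -
  have a0: "0 \<le> \<alpha>" using assms(1)[of 0 0] nonneg[of "A $ 0 $ 0"] by linarith
  have b0: "0 \<le> \<beta>" using assms(2)[of 0 0] nonneg[of "B $ 0 $ 0"] by linarith
  show ?thesis unfolding matrix_matrix_mult_def vec_lambda_beta
  proof (rule sum_le)
    show "0 \<le> \<alpha> * \<beta>" using a0 b0 by simp
    fix k show "absv (A $ i $ k * B $ k $ j) \<le> \<alpha> * \<beta>"
      unfolding mult using assms a0 b0 by (intro mult_mono) auto
  qed simp
qed

lemma J_bound: "absv ((Jmat :: 'a mat4) $ i $ j) \<le> 1"
  unfolding Jmat_def by simp

lemma mat_bound: "absv ((mat a :: 'a mat4) $ i $ j) \<le> absv a"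
  unfolding mat_def by simp

lemma Kp_mult: assumes "k1 \<in> Kp absv" "k2 \<in> Kp absv" shows "k1 ** k2 \<in> Kp absv"
proof -
  obtain \<mu>1 where m1: "\<mu>1 \<noteq> 0" "absv \<mu>1 \<le> 1" "absv (inverse \<mu>1) \<le> 1"
    "transpose k1 ** Jmat ** k1 = mat \<mu>1 ** Jmat" and e1: "\<And>i j. absv (k1 $ i $ j) \<le> 1"
    using assms(1) unfolding Kp_iff by blast
  obtain \<mu>2 where m2: "\<mu>2 \<noteq> 0" "absv \<mu>2 \<le> 1" "absv (inverse \<mu>2) \<le> 1"
    "transpose k2 ** Jmat ** k2 = mat \<mu>2 ** Jmat" and e2: "\<And>i j. absv (k2 $ i $ j) \<le> 1"
    using assms(2) unfolding Kp_iff by blast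
  have "absv ((k1 ** k2) $ i $ j) \<le> 1" for i j using norm_mult[OF e1 e2, of i j] by simp
  moreover have "\<mu>1 * \<mu>2 \<noteq> 0" "absv (\<mu>1 * \<mu>2) \<le> 1" "absv (inverse (\<mu>1 * \<mu>2)) \<le> 1"
    using m1 m2 by (auto simp: mult abs_inverse intro: mult_le_one)
  moreover have "transpose (k1 ** k2) ** Jmat ** (k1 ** k2) = mat (\<mu>1 * \<mu>2) ** Jmat"
    by (rule sim_mult[OF m1(4) m2(4)])
  ultimately show ?thesis unfolding Kp_iff by blast
qed

lemma Kp_inv: assumes "k \<in> Kp absv"
  shows "matrix_inv k \<in> Kp absv" "k ** matrix_inv k = mat 1" "matrix_inv k ** k = mat 1"
proof -
  obtain \<mu> where m: "\<mu> \<noteq> 0" "absv \<mu> \<le> 1" "absv (inverse \<mu>) \<le> 1"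
    "transpose k ** Jmat ** k = mat \<mu> ** Jmat" and e: "\<And>i j. absv (k $ i $ j) \<le> 1"
    using assms unfolding Kp_iff by blast
  have eq: "matrix_inv k = kinv \<mu> k"
    by (rule matrix_inv_eq[OF kinv_right[OF m(4) m(1)] kinv_left[OF m(4) m(1)]])
  show "k ** matrix_inv k = mat 1" unfolding eq by (rule kinv_right[OF m(4) m(1)])
  show "matrix_inv k ** k = mat 1" unfolding eq by (rule kinv_left[OF m(4) m(1)])
  have et: "absv (transpose k $ i $ j) \<le> 1" for i j using e by (simp add: transpose_def)
  have e3: "absv ((Jmat ** transpose k ** Jmat) $ i $ j) \<le> 1" for i j
    using norm_mult[OF norm_mult[OF J_bound et] J_bound] by simp
  have em: "absv ((mat (- inverse \<mu>) :: 'a mat4) $ i $ j) \<le> 1" for i j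
    using mat_bound[of "- inverse \<mu>" i j] m(3) by simp
  have "absv (kinv \<mu> k $ i $ j) \<le> 1" for i j
    unfolding kinv_def using norm_mult[OF em e3, of i j] by simp
  moreover have "inverse \<mu> \<noteq> 0" "absv (inverse \<mu>) \<le> 1" "absv (inverse (inverse \<mu>)) \<le> 1"
    using m by auto
  moreover note kinv_sim[OF m(4) m(1)]
  ultimately show "matrix_inv k \<in> Kp absv" unfolding eq Kp_iff by blast
qed

lemma mat1_Kp: "mat 1 \<in> Kp absv"
  unfolding Kp_iff by (auto simp: mat_bound[of 1, simplified] transpose_mat intro!: exI[of _ 1])

definition Xset :: "'a mat4 \<Rightarrow> 'a mat4 set" where
  "Xset D = {k1 ** D ** k2 | k1 k2. k1 \<in> Kp absv \<and> k2 \<in> Kp absv}"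

lemma Xset_mult: assumes "g \<in> Xset D" "a \<in> Kp absv" "b \<in> Kp absv" shows "a ** g ** b \<in> Xset D"
proof -
  obtain k1 k2 where g: "g = k1 ** D ** k2" "k1 \<in> Kp absv" "k2 \<in> Kp absv"
    using assms(1) unfolding Xset_def by blast
  have "a ** g ** b = (a ** k1) ** D ** (k2 ** b)" unfolding g by (simp only: matrix_mul_assoc)
  then show ?thesis unfolding Xset_def using Kp_mult g assms by blast
qed

definition Cset :: "real \<Rightarrow> 'a mat4 set" where
  "Cset r = {k \<in> Kp absv. \<forall>i j. absv (k $ i $ j - mat 1 $ i $ j) \<le> r}"

lemma Cset_mult: assumes "g \<in> Cset r" "a \<in> Kp absv" "b \<in> Kp absv" "a ** b = mat 1"
  shows "a ** g ** b \<in> Cset r"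
proof -
  have gK: "g \<in> Kp absv" and gr: "\<And>i j. absv (g $ i $ j - mat 1 $ i $ j) \<le> r"
    using assms(1) unfolding Cset_def by auto
  have "a ** (g - mat 1) ** b = a ** g ** b - a ** mat 1 ** b"
    by (simp only: matrix_diff_ldistrib matrix_diff_rdistrib)
  also have "\<dots> = a ** g ** b - mat 1" by (simp only: matrix_mul_rid assms(4))
  finally have E: "a ** g ** b - mat 1 = a ** (g - mat 1) ** b" by (rule sym)
  have ea: "\<And>i j. absv (a $ i $ j) \<le> 1" and eb: "\<And>i j. absv (b $ i $ j) \<le> 1"
    using assms(2,3) unfolding Kp_iff by auto
  have gr': "\<And>i j. absv ((g - mat 1) $ i $ j) \<le> r" using gr by simp
  have B: "absv ((a ** (g - mat 1) ** b) $ i $ j) \<le> 1 * r * 1" for i j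
    by (rule norm_mult[OF norm_mult[OF ea gr'] eb])
  have "absv ((a ** g ** b) $ i $ j - mat 1 $ i $ j) \<le> r" for i j
  proof -
    have "(a ** g ** b) $ i $ j - mat 1 $ i $ j = (a ** g ** b - mat 1) $ i $ j" by simp
    then show ?thesis using B[of i j] unfolding E by simp
  qed
  moreover have "a ** g ** b \<in> Kp absv" using Kp_mult assms(2,3) gK by blast
  ultimately show ?thesis unfolding Cset_def by blast
qed

lemma conj_rewrite: "mat c ** matrix_inv k ** u ** k = matrix_inv k ** (mat c ** u) ** (k :: 'a mat4)"
  by (simp only: mat_comm[of c "matrix_inv k"] matrix_mul_assoc)

lemma conj_inv:
  assumes inv: "\<And>g a b. g \<in> S \<Longrightarrow> a \<in> Kp absv \<Longrightarrow> b \<in> Kp absv \<Longrightarrow> a ** b = mat 1 \<Longrightarrow> a ** g ** b \<in> S"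
    and k: "k \<in> Kp absv"
  shows "mat c ** matrix_inv k ** u ** k \<in> S \<longleftrightarrow> mat c ** u \<in> S"
proof -
  note ki = Kp_inv[OF k]
  show ?thesis unfolding conj_rewrite
  proof
    assume "matrix_inv k ** (mat c ** u) ** k \<in> S"
    then have "k ** (matrix_inv k ** (mat c ** u) ** k) ** matrix_inv k \<in> S"
      using inv k ki by blast
    moreover have "k ** (matrix_inv k ** (mat c ** u) ** k) ** matrix_inv k = mat c ** u"
      by (simp only: matrix_mul_assoc ki(2) matrix_mul_lid matrix_mul_rid)
        (simp only: matrix_mul_assoc[symmetric] ki(2) matrix_mul_rid)
    ultimately show "mat c ** u \<in> S" by simp
  next
    assume "mat c ** u \<in> S"
    then show "matrix_inv k ** (mat c ** u) ** k \<in> S" using inv k ki by blast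
  qed
qed

end


lemma gform: "mat c ** u_min x = (\<chi> i j. if i = j then c else if i = 0 \<and> j = 2 then c * x else (0::'a::field))"
  unfolding mat_mult_left by (simp add: u_min_def vec_eq_iff mat_def)

lemma u_sim: "transpose (u_min (x::'a::field)) ** Jmat ** u_min x = mat 1 ** Jmat"
  by (simp add: vec_eq_iff forall_4 sum_4 matrix_matrix_mult_def transpose_def Jmat_def u_min_def mat_def)

lemma matc_sim: "transpose (mat c) ** Jmat ** mat c = mat (c * c) ** (Jmat :: 'a::comm_ring_1 mat4)"
proof -
  have "transpose (mat c) ** Jmat ** mat c = mat c ** (Jmat ** mat c)"
    by (simp only: transpose_mat matrix_mul_assoc)
  also have "\<dots> = mat c ** (mat c ** Jmat)" by (simp only: mat_comm)
  also have "\<dots> = mat (c * c) ** Jmat" by (rule mat_mat_J)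
  finally show ?thesis .
qed

lemma g_sim: "transpose (mat c ** u_min x) ** Jmat ** (mat c ** u_min x) = mat (c * c) ** (Jmat :: 'a::field mat4)"
  using sim_mult[OF matc_sim u_sim, of c x] by simp

lemma diag_sim: "a * c = b * d \<Longrightarrow> transpose (diag4 a b c d) ** Jmat ** diag4 a b c d = mat (a * c) ** (Jmat :: 'a::field mat4)"
  by (simp add: vec_eq_iff forall_4 sum_4 matrix_matrix_mult_def transpose_def Jmat_def diag4_def mat_def mult.commute)

lemma diag_scalar: "diag4 a a a a = (mat a :: 'a::field mat4)"
  by (simp add: vec_eq_iff forall_4 diag4_def mat_def)

definition K1 :: "'a::field \<Rightarrow> 'a \<Rightarrow> 'a \<Rightarrow> 'a mat4" where
  "K1 t e w = (\<chi> i j. if i = 1 \<and> j = 0 then t else if i = 2 \<and> j = 1 then t / e else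
      if i = 3 \<and> j = 2 then t else if i = 0 \<and> j = 3 then - t * e else if i = 2 \<and> j = 3 then - t * w else 0)"

definition K2 :: "'a::field \<Rightarrow> 'a mat4" where
  "K2 y = (\<chi> i j. if i = 1 \<and> j = 0 then -1 else if i = 3 \<and> j = 0 then - y else
      if i = 0 \<and> j = 1 then 1 else if i = 3 \<and> j = 2 then -1 else if i = 2 \<and> j = 3 then 1 else 0)"

lemma K1_sim: "e \<noteq> 0 \<Longrightarrow> transpose (K1 t e w) ** Jmat ** K1 t e w = mat (t * t) ** (Jmat :: 'a::field mat4)"
  by (simp add: vec_eq_iff forall_4 sum_4 matrix_matrix_mult_def transpose_def Jmat_def K1_def mat_def)

lemma K2_sim: "transpose (K2 y) ** Jmat ** K2 y = mat 1 ** (Jmat :: 'a::field mat4)"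
  by (simp add: vec_eq_iff forall_4 sum_4 matrix_matrix_mult_def transpose_def Jmat_def K2_def mat_def)

lemma decomp:
  fixes x w \<alpha> t :: "'a::field"
  assumes "x \<noteq> 0" "w \<noteq> 0"
  shows "K1 t (x * w) w ** diag4 \<alpha> (\<alpha> * w) \<alpha> (\<alpha> / w) ** K2 (1 / x) = mat (t * \<alpha>) ** u_min x"
  using assms by (simp add: vec_eq_iff forall_4 sum_4 matrix_matrix_mult_def K1_def K2_def diag4_def mat_def u_min_def)


definition minor :: "'a::comm_ring_1 mat4 \<Rightarrow> 4 \<Rightarrow> 4 \<Rightarrow> 4 \<Rightarrow> 4 \<Rightarrow> 'a" where
  "minor A i j k l = A $ i $ k * A $ j $ l - A $ i $ l * A $ j $ k"

lemma prod_expand: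
  "(A ** B) $ i $ k * (A ** B) $ j $ l = (\<Sum>r\<in>UNIV. \<Sum>s\<in>UNIV. A $ i $ r * A $ j $ s * (B $ r $ k * B $ s $ l))"
  for A B :: "'a::comm_ring_1 mat4"
  unfolding matrix_matrix_mult_def vec_lambda_beta sum_product
  by (intro sum.cong refl) (simp add: mult_ac)

lemma prod_expand2:
  "(A ** B) $ i $ l * (A ** B) $ j $ k = (\<Sum>r\<in>UNIV. \<Sum>s\<in>UNIV. B $ r $ k * B $ s $ l * (A $ i $ s * A $ j $ r))"
  for A B :: "'a::comm_ring_1 mat4"
proof -
  have "(A ** B) $ i $ l * (A ** B) $ j $ k = (\<Sum>s\<in>UNIV. \<Sum>r\<in>UNIV. A $ i $ s * B $ s $ l * (A $ j $ r * B $ r $ k))"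
    unfolding matrix_matrix_mult_def vec_lambda_beta sum_product by simp
  also have "\<dots> = (\<Sum>r\<in>UNIV. \<Sum>s\<in>UNIV. A $ i $ s * B $ s $ l * (A $ j $ r * B $ r $ k))"
    by (rule sum.swap)
  also have "\<dots> = (\<Sum>r\<in>UNIV. \<Sum>s\<in>UNIV. B $ r $ k * B $ s $ l * (A $ i $ s * A $ j $ r))"
    by (intro sum.cong refl) (simp add: mult_ac)
  finally show ?thesis .
qed

lemma prod_expand1':
  "(A ** B) $ i $ l * (A ** B) $ j $ k = (\<Sum>r\<in>UNIV. \<Sum>s\<in>UNIV. A $ i $ r * A $ j $ s * (B $ r $ l * B $ s $ k))"
  for A B :: "'a::comm_ring_1 mat4"
  by (rule prod_expand)

lemma prod_expand2':
  "(A ** B) $ i $ k * (A ** B) $ j $ l = (\<Sum>r\<in>UNIV. \<Sum>s\<in>UNIV. B $ r $ k * B $ s $ l * (A $ i $ r * A $ j $ s))"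
  for A B :: "'a::comm_ring_1 mat4"
  unfolding matrix_matrix_mult_def vec_lambda_beta sum_product
  by (intro sum.cong refl) (simp add: mult_ac)

lemma minor_mult1: "minor (A ** B) i j k l = (\<Sum>r\<in>UNIV. \<Sum>s\<in>UNIV. A $ i $ r * A $ j $ s * minor B r s k l)"
  for A B :: "'a::comm_ring_1 mat4"
  unfolding minor_def prod_expand prod_expand1'
  by (simp add: sum_subtractf right_diff_distrib)

lemma minor_mult2: "minor (A ** B) i j k l = (\<Sum>r\<in>UNIV. \<Sum>s\<in>UNIV. B $ r $ k * B $ s $ l * minor A i j r s)"
  for A B :: "'a::comm_ring_1 mat4"
  unfolding minor_def prod_expand2'[of A B i k j l] prod_expand2[of A B i l j k]
  by (simp add: sum_subtractf right_diff_distrib)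

lemma minor_D: "minor (diag4 a b c d) 2 3 2 3 = c * d"
  by (simp add: minor_def diag4_def)

lemma minor_g: "minor (mat c ** u_min x) i j k l =
   (c * c) * minor (u_min x) i j k l"
  for c x :: "'a::field"
  by (simp add: minor_def mat_mult_left algebra_simps)

lemma minor_u_all: "\<forall>i j k l. minor (u_min x) i j k l \<in> {0, 1, -1, x, -x}"
  for x :: "'a::field"
  unfolding forall_4 by (simp add: minor_def u_min_def mat_def)

lemma minor_u: "minor (u_min x) i j k l \<in> {0, 1, -1, x, -x}"
  for x :: "'a::field"
  using minor_u_all by blast


context qp begin

lemma pi_nz: "(of_nat p :: 'a) \<noteq> 0" using p_pos by simp

lemma abs_powi: "absv ((of_nat p :: 'a) powi n) = real p powr real_of_int (- n)"
proof (cases "n \<ge> 0")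
  case True
  then have "(of_nat p :: 'a) powi n = of_nat p ^ nat n" by (simp add: power_int_def)
  then have "absv ((of_nat p :: 'a) powi n) = inverse (real p) ^ nat n" by (simp add: abs_power abs_p)
  also have "\<dots> = inverse (real p powr real (nat n))" using p_pos by (simp add: powr_realpow power_inverse)
  also have "\<dots> = real p powr real_of_int (- n)" using True by (simp add: powr_minus)
  finally show ?thesis .
next
  case False
  then have "(of_nat p :: 'a) powi n = inverse (of_nat p) ^ nat (- n)" by (simp add: power_int_def)
  then have "absv ((of_nat p :: 'a) powi n) = real p ^ nat (- n)"
    by (simp add: abs_power abs_p abs_inverse)
  also have "\<dots> = real p powr real_of_int (- n)" using False p_pos
    by (simp add: powr_realpow[symmetric])
  finally show ?thesis .
qed

lemma P_mult: "real p powr real_of_int a * real p powr real_of_int b = real p powr real_of_int (a + b)"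
  by (simp add: powr_add)
lemma P_pos: "real p powr real_of_int a > 0" using p_pos by simp
lemma P_0: "real p powr real_of_int 0 = 1" using p_pos by simp
lemma P_inj: "real p powr real_of_int a = real p powr real_of_int b \<longleftrightarrow> a = b"
  using p_gt1 by (simp add: powr_inj)

lemma g_entry: "absv ((mat c ** u_min x) $ i $ j) \<le> absv c * max 1 (absv x)"
proof -
  have c0: "absv c \<ge> 0" by simp
  have "absv c \<le> absv c * max 1 (absv x)" using mult_left_mono[of 1 "max 1 (absv x)" "absv c"] by simp
  moreover have "absv c * absv x \<le> absv c * max 1 (absv x)" by (intro mult_left_mono) auto
  ultimately show ?thesis unfolding gform by (auto simp: mult)
qed

lemma g_minor: "absv (minor (mat c ** u_min x) i j k l) \<le> absv c * absv c * max 1 (absv x)"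
proof -
  have "minor (u_min x) i j k l \<in> {0, 1, -1, x, -x}" by (rule minor_u)
  then have "absv (minor (u_min x) i j k l) \<le> max 1 (absv x)" by auto
  then show ?thesis unfolding minor_g mult by (intro mult_left_mono) auto
qed

lemma minor_bound1:
  assumes "\<And>i j. absv (A $ i $ j) \<le> 1" "\<And>i j k l. absv (minor B i j k l) \<le> M"
  shows "absv (minor (A ** B) i j k l) \<le> M"
proof -
  have M0: "0 \<le> M" using assms(2)[of 0 0 0 0] nonneg[of "minor B 0 0 0 0"] by linarith
  show ?thesis unfolding minor_mult1
  proof (intro sum_le M0 finite)
    fix r s
    have "absv (A $ i $ r * A $ j $ s * minor B r s k l) \<le> 1 * 1 * M"
      unfolding mult using assms M0 by (intro mult_mono) auto
    then show "absv (A $ i $ r * A $ j $ s * minor B r s k l) \<le> M" by simp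
  qed
qed

lemma minor_bound2:
  assumes "\<And>i j. absv (B $ i $ j) \<le> 1" "\<And>i j k l. absv (minor A i j k l) \<le> M"
  shows "absv (minor (A ** B) i j k l) \<le> M"
proof -
  have M0: "0 \<le> M" using assms(2)[of 0 0 0 0] nonneg[of "minor A 0 0 0 0"] by linarith
  show ?thesis unfolding minor_mult2
  proof (intro sum_le M0 finite)
    fix r s
    have "absv (B $ r $ k * B $ s $ l * minor A i j r s) \<le> 1 * 1 * M"
      unfolding mult using assms M0 by (intro mult_mono) auto
    then show "absv (B $ r $ k * B $ s $ l * minor A i j r s) \<le> M" by simp
  qed
qed

lemma Kp_entry: "k \<in> Kp absv \<Longrightarrow> absv (k $ i $ j) \<le> 1" unfolding Kp_iff by blast

lemma Kp_mu: assumes "k \<in> Kp absv"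
  obtains \<mu> where "absv \<mu> = 1" "transpose k ** Jmat ** k = mat \<mu> ** Jmat"
  using assms mu_unit unfolding Kp_iff by blast

lemma fwd:
  fixes \<alpha> \<beta> \<gamma> \<delta> c x :: 'a
  assumes g: "mat c ** u_min x \<in> Xset (diag4 \<alpha> \<beta> \<gamma> \<delta>)" and sim: "\<alpha> * \<gamma> = \<beta> * \<delta>"
  shows "absv c * absv c = absv (\<alpha> * \<gamma>)"
    and "absv \<delta> \<le> absv c * max 1 (absv x)"
    and "absv (\<gamma> * \<delta>) \<le> absv c * absv c * max 1 (absv x)"
    and "\<And>Bd. absv \<alpha> \<le> Bd \<Longrightarrow> absv \<beta> \<le> Bd \<Longrightarrow> absv \<gamma> \<le> Bd \<Longrightarrow> absv \<delta> \<le> Bd \<Longrightarrow> absv (c * x) \<le> Bd"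
proof -
  define D where "D = diag4 \<alpha> \<beta> \<gamma> \<delta>"
  define g where "g = mat c ** u_min x"
  obtain k1 k2 where k: "g = k1 ** D ** k2" "k1 \<in> Kp absv" "k2 \<in> Kp absv"
    using assms(1) unfolding Xset_def D_def g_def by blast
  obtain \<mu>1 where m1: "absv \<mu>1 = 1" "transpose k1 ** Jmat ** k1 = mat \<mu>1 ** Jmat" using Kp_mu[OF k(2)] by blast
  obtain \<mu>2 where m2: "absv \<mu>2 = 1" "transpose k2 ** Jmat ** k2 = mat \<mu>2 ** Jmat" using Kp_mu[OF k(3)] by blast
  have "transpose g ** Jmat ** g = mat (\<mu>1 * (\<alpha> * \<gamma>) * \<mu>2) ** Jmat"
    unfolding k(1) by (intro sim_mult m2(2) sim_mult[OF m1(2)]) (unfold D_def, rule diag_sim[OF sim])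
  moreover have "transpose g ** Jmat ** g = mat (c * c) ** Jmat" unfolding g_def by (rule g_sim)
  ultimately have "c * c = \<mu>1 * (\<alpha> * \<gamma>) * \<mu>2" using mult_J_inj by metis
  then have "absv (c * c) = absv (\<mu>1 * (\<alpha> * \<gamma>) * \<mu>2)" by simp
  then show "absv c * absv c = absv (\<alpha> * \<gamma>)" using m1 m2 by (simp add: mult)
  note i1 = Kp_inv[OF k(2)] and i2 = Kp_inv[OF k(3)]
  have Dg: "D = matrix_inv k1 ** g ** matrix_inv k2"
  proof -
    have "matrix_inv k1 ** g ** matrix_inv k2 = (matrix_inv k1 ** k1) ** D ** (k2 ** matrix_inv k2)"
      unfolding k(1) by (simp only: matrix_mul_assoc)
    then show ?thesis using i1 i2 by (simp only: matrix_mul_lid matrix_mul_rid)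
  qed
  have ki1: "\<And>i j. absv (matrix_inv k1 $ i $ j) \<le> 1" using i1(1) Kp_entry by blast
  have ki2: "\<And>i j. absv (matrix_inv k2 $ i $ j) \<le> 1" using i2(1) Kp_entry by blast
  have ge: "\<And>i j. absv (g $ i $ j) \<le> absv c * max 1 (absv x)" unfolding g_def by (rule g_entry)
  have "absv (D $ 3 $ 3) \<le> 1 * (absv c * max 1 (absv x)) * 1"
    unfolding Dg by (rule norm_mult[OF norm_mult[OF ki1 ge] ki2])
  then show "absv \<delta> \<le> absv c * max 1 (absv x)" unfolding D_def diag4_def by simp
  have gm: "\<And>i j k l. absv (minor g i j k l) \<le> absv c * absv c * max 1 (absv x)" unfolding g_def by (rule g_minor)
  have "absv (minor (matrix_inv k1 ** (g ** matrix_inv k2)) 2 3 2 3) \<le> absv c * absv c * max 1 (absv x)"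
    by (rule minor_bound1[OF ki1 minor_bound2[OF ki2 gm]])
  then show "absv (\<gamma> * \<delta>) \<le> absv c * absv c * max 1 (absv x)"
    using Dg minor_D[of \<alpha> \<beta> \<gamma> \<delta>] unfolding D_def by (simp add: matrix_mul_assoc)
  fix Bd assume b: "absv \<alpha> \<le> Bd" "absv \<beta> \<le> Bd" "absv \<gamma> \<le> Bd" "absv \<delta> \<le> Bd"
  have Bd0: "0 \<le> Bd" using b(1) nonneg[of \<alpha>] by linarith
  have De: "\<And>i j. absv (D $ i $ j) \<le> Bd"
  proof -
    fix i j show "absv (D $ i $ j) \<le> Bd"
      unfolding D_def diag4_def using b Bd0 by auto
  qed
  have k1e: "\<And>i j. absv (k1 $ i $ j) \<le> 1" using k(2) Kp_entry by blast
  have k2e: "\<And>i j. absv (k2 $ i $ j) \<le> 1" using k(3) Kp_entry by blast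
  have "absv (g $ 0 $ 2) \<le> 1 * Bd * 1" unfolding k(1) by (rule norm_mult[OF norm_mult[OF k1e De] k2e])
  then show "absv (c * x) \<le> Bd" unfolding g_def gform by simp
qed

end


context qp begin

abbreviation P :: "int \<Rightarrow> real" where "P n \<equiv> real p powr real_of_int n"

definition Dm :: "int \<Rightarrow> int \<Rightarrow> int \<Rightarrow> 'a mat4" where
  "Dm a1 a2 a3 = diag4 (of_nat p powi (- a1)) (of_nat p powi (- a2))
                      (of_nat p powi (a1 - a3)) (of_nat p powi (a2 - a3))"

lemma h_coset_eq: "h_coset p absv a1 a2 a3 = indicator (Xset (Dm a1 a2 a3))"
  unfolding h_coset_def Xset_def Dm_def by simp

lemma powi_add': "(of_nat p :: 'a) powi (a + b) = of_nat p powi a * of_nat p powi b"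
  using pi_nz by (simp add: power_int_add)

lemma Dm_sim: "(of_nat p :: 'a) powi (- a1) * of_nat p powi (a1 - a3) = of_nat p powi (- a2) * of_nat p powi (a2 - a3)"
  unfolding powi_add'[symmetric] by simp

lemma Dm_abs: "absv ((of_nat p :: 'a) powi (- a1) * of_nat p powi (a1 - a3)) = P a3"
  unfolding powi_add'[symmetric] abs_powi by simp

lemma P_le_iff: "P a \<le> P b \<longleftrightarrow> a \<le> b" using p_gt1 by simp
lemma P_less_iff: "P a < P b \<longleftrightarrow> a < b" using p_gt1 by simp

lemma sq_eq_real: "0 \<le> (a::real) \<Longrightarrow> 0 \<le> b \<Longrightarrow> a * a = b * b \<Longrightarrow> a = b"
  using power2_eq_iff_nonneg[of a b] by (simp add: power2_eq_square)

lemma part1: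
  assumes "odd a3" "c \<noteq> 0"
  shows "mat (of_rat c) ** u_min x \<notin> Xset (Dm a1 a2 a3)"
proof
  assume h: "mat (of_rat c) ** u_min x \<in> Xset (Dm a1 a2 a3)"
  have "absv (of_rat c :: 'a) * absv (of_rat c) = P a3"
    using fwd(1)[OF h[unfolded Dm_def] Dm_sim] Dm_abs by simp
  moreover obtain k where k: "absv (of_rat c :: 'a) = P k" using rat_values[OF assms(2)] rat by metis
  ultimately have "P (k + k) = P a3" by (simp only: P_mult)
  then have "k + k = a3" by (simp only: P_inj)
  then have "a3 = 2 * k" by simp
  then show False using assms(1) by simp
qed

lemma part2_fwd:
  assumes h: "mat c ** u_min x \<in> Xset (Dm a1 a2 (2 * m))" and r: "m \<ge> a1" "a1 \<ge> a2" "a2 \<ge> 0"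
  shows "absv c = P m \<and> a1 = m \<and> (a2 = m \<longrightarrow> absv x \<le> 1) \<and> (a2 < m \<longrightarrow> absv x = P (m - a2))"
proof -
  note h' = h[unfolded Dm_def]
  define C where "C = absv c"
  define Mx where "Mx = max 1 (absv x)"
  have "C * C = P (2 * m)" unfolding C_def using fwd(1)[OF h' Dm_sim] Dm_abs by simp
  also have "\<dots> = P m * P m" by (simp add: P_mult)
  finally have C: "C = P m" using sq_eq_real[of C "P m"] P_pos unfolding C_def by simp
  have f2: "P (2 * m - a2) \<le> P m * Mx"
    using fwd(2)[OF h' Dm_sim] unfolding abs_powi C_def[symmetric] C Mx_def by simp
  have f3: "P (2 * m - a1) * P (2 * m - a2) \<le> P m * P m * Mx"
    using fwd(3)[OF h' Dm_sim] unfolding mult abs_powi C_def[symmetric] C Mx_def by simp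
  have f4: "C * absv x \<le> P (2 * m - a2)"
  proof -
    have "absv (c * x) \<le> P (2 * m - a2)"
      by (rule fwd(4)[OF h' Dm_sim]; unfold abs_powi P_le_iff; use r in linarith)
    then show ?thesis unfolding C_def mult .
  qed
  have "P m * absv x \<le> P m * P (m - a2)" using f4 unfolding C P_mult by simp
  then have xb: "absv x \<le> P (m - a2)" using P_pos[of m] by simp
  have "P m * P (m - a2) \<le> P m * Mx" using f2 unfolding P_mult by simp
  then have Mb: "P (m - a2) \<le> Mx" using P_pos[of m] by simp
  show ?thesis
  proof (cases "a2 = m")
    case True
    then have "a1 = m" using r by simp
    moreover have "absv x \<le> 1" using xb True P_0 by simp
    ultimately show ?thesis using C True unfolding C_def by simp
  next
    case False
    then have lt: "a2 < m" using r by simp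
    have "1 < P (m - a2)" using lt P_less_iff[of 0 "m - a2"] P_0 by simp
    then have "Mx = absv x" using Mb unfolding Mx_def by linarith
    then have xe: "absv x = P (m - a2)" using Mb xb by simp
    have "P (2 * m - a1 + (2 * m - a2)) \<le> P (m + m + (m - a2))"
      using f3 unfolding P_mult \<open>Mx = absv x\<close> xe P_mult by simp
    then have "a1 \<ge> m" unfolding P_le_iff by simp
    then have "a1 = m" using r by simp
    then show ?thesis using C xe lt unfolding C_def by simp
  qed
qed

end


context qp begin

lemma Kp_intro:
  assumes "\<And>i j. absv (k $ i $ j) \<le> 1" "transpose k ** Jmat ** k = mat \<mu> ** Jmat" "absv \<mu> = 1"
  shows "k \<in> Kp absv"
proof -
  have "\<mu> \<noteq> 0" using assms(3) by auto
  moreover have "absv (inverse \<mu>) \<le> 1" using assms(3) by (simp add: abs_inverse)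
  ultimately show ?thesis unfolding Kp_iff using assms by auto
qed

lemma K1_entries:
  assumes "absv t \<le> 1" "absv (t / e) \<le> 1" "absv (t * e) \<le> 1" "absv (t * w) \<le> 1"
  shows "absv (K1 t e w $ i $ j) \<le> 1"
  using assms by (simp add: K1_def)

lemma K2_entries:
  assumes "absv y \<le> 1" shows "absv (K2 y $ i $ j) \<le> 1"
  using assms by (simp add: K2_def)

lemma part2_bwd:
  assumes c: "absv c = P m" and a1: "a1 = m" and r: "a2 \<le> m" "0 \<le> a2"
    and x1: "a2 = m \<Longrightarrow> absv x \<le> 1" and x2: "a2 < m \<Longrightarrow> absv x = P (m - a2)"
  shows "mat c ** u_min x \<in> Xset (Dm a1 a2 (2 * m))"
proof -
  define \<pi> where "\<pi> = (of_nat p :: 'a)"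
  define \<alpha> where "\<alpha> = \<pi> powi (- m)"
  have a\<alpha>: "absv \<alpha> = P m" unfolding \<alpha>_def \<pi>_def abs_powi by simp
  then have \<alpha>0: "\<alpha> \<noteq> 0" using P_pos[of m] by auto
  define t where "t = c / \<alpha>"
  have at: "absv t = 1" unfolding t_def abs_divide c a\<alpha> using P_pos[of m] by simp
  have t\<alpha>: "t * \<alpha> = c" unfolding t_def using \<alpha>0 by simp
  have tt: "absv (t * t) = 1" using at by (simp add: mult)
  have e3: "\<pi> powi (m - 2 * m) = \<alpha>" unfolding \<alpha>_def by simp
  show ?thesis
  proof (cases "a2 = m")
    case True
    have D: "Dm a1 a2 (2 * m) = mat \<alpha>"
      unfolding Dm_def a1 True \<pi>_def[symmetric] e3 unfolding \<alpha>_def by (rule diag_scalar)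
    define k1 where "k1 = mat t ** u_min x"
    have "absv (k1 $ i $ j) \<le> 1" for i j
    proof -
      have "absv (k1 $ i $ j) \<le> absv t * max 1 (absv x)" unfolding k1_def by (rule g_entry)
      then show ?thesis using at x1[OF True] by simp
    qed
    then have k1K: "k1 \<in> Kp absv" unfolding k1_def by (rule Kp_intro[OF _ g_sim tt])
    have "k1 ** mat \<alpha> ** mat 1 = mat (t * \<alpha>) ** u_min x"
      unfolding k1_def by (simp only: matrix_mul_rid matrix_mul_assoc[symmetric] mat_comm[of \<alpha> "u_min x", symmetric] mat_mat_J)
    then have "mat c ** u_min x = k1 ** Dm a1 a2 (2 * m) ** mat 1" unfolding D t\<alpha> by simp
    then show ?thesis unfolding Xset_def using k1K mat1_Kp by blast
  next
    case False
    then have lt: "a2 < m" using r by simp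
    define w where "w = \<pi> powi (m - a2)"
    have aw: "absv w = P (a2 - m)" unfolding w_def \<pi>_def abs_powi by simp
    then have w0: "w \<noteq> 0" using P_pos[of "a2 - m"] by auto
    have ax: "absv x = P (m - a2)" using x2[OF lt] .
    then have x0: "x \<noteq> 0" using P_pos[of "m - a2"] by auto
    have e1: "\<pi> powi (- a2) = \<alpha> * w" unfolding \<alpha>_def w_def \<pi>_def powi_add'[symmetric] by simp
    have e4: "\<pi> powi (a2 - 2 * m) = \<alpha> / w"
    proof -
      have "\<pi> powi (a2 - 2 * m) = \<alpha> * \<pi> powi (- (m - a2))" unfolding \<alpha>_def \<pi>_def powi_add'[symmetric] by simp
      also have "\<pi> powi (- (m - a2)) = inverse w" unfolding w_def by (rule power_int_minus)
      finally show ?thesis by (simp add: divide_inverse)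
    qed
    have D: "Dm a1 a2 (2 * m) = diag4 \<alpha> (\<alpha> * w) \<alpha> (\<alpha> / w)"
      unfolding Dm_def a1 \<pi>_def[symmetric] e1 e3 e4 \<alpha>_def[symmetric] ..
    have PP: "P (m - a2) * P (a2 - m) = 1" unfolding P_mult using P_0 by simp
    have le1: "P (a2 - m) \<le> 1" using P_le_iff[of "a2 - m" 0] P_0 lt by simp
    have ae: "absv (x * w) = 1" unfolding mult ax aw PP ..
    then have e0: "x * w \<noteq> 0" by auto
    have k1e: "absv (K1 t (x * w) w $ i $ j) \<le> 1" for i j
      by (rule K1_entries) (use at ae aw le1 in \<open>simp_all add: mult abs_divide\<close>)
    have k1K: "K1 t (x * w) w \<in> Kp absv" by (rule Kp_intro[OF k1e K1_sim[OF e0] tt])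
    have ay: "absv (1 / x) \<le> 1" unfolding abs_divide ax using PP le1
      by (metis abs_1 divide_self_if P_pos less_irrefl mult.commute nonzero_eq_divide_eq)
    have k2K: "K2 (1 / x) \<in> Kp absv" by (rule Kp_intro[OF K2_entries[OF ay] K2_sim]) simp
    have "mat c ** u_min x = K1 t (x * w) w ** Dm a1 a2 (2 * m) ** K2 (1 / x)"
      unfolding D decomp[OF x0 w0] t\<alpha> ..
    then show ?thesis unfolding Xset_def using k1K k2K by blast
  qed
qed

lemma part3:
  assumes l: "l \<ge> 1"
  shows "mat c ** u_min x \<in> Cset (P (- int l)) \<longleftrightarrow> absv (c - 1) \<le> P (- int l) \<and> absv x \<le> P (- int l)"
proof -
  define r where "r = P (- int l)"
  have r1: "r < 1" unfolding r_def using P_less_iff[of "- int l" 0] P_0 l by simp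
  have r0: "0 < r" unfolding r_def by (rule P_pos)
  show ?thesis unfolding r_def[symmetric]
  proof
    assume h: "mat c ** u_min x \<in> Cset r"
    then have E: "absv ((mat c ** u_min x) $ i $ j - mat 1 $ i $ j) \<le> r" for i j
      unfolding Cset_def by blast
    have c1: "absv (c - 1) \<le> r" using E[of 0 0] unfolding gform by (simp add: mat_def)
    have cx: "absv (c * x) \<le> r" using E[of 0 2] unfolding gform by (simp add: mat_def)
    have "absv (1 + (c - 1)) = absv (1::'a)" using c1 r1 by (intro ultra_eq) simp
    then have ac: "absv c = 1" by simp
    show "absv (c - 1) \<le> r \<and> absv x \<le> r" using c1 cx ac by (simp add: mult)
  next
    assume h: "absv (c - 1) \<le> r \<and> absv x \<le> r"
    have "absv (1 + (c - 1)) = absv (1::'a)" using h r1 by (intro ultra_eq) simp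
    then have ac: "absv c = 1" by simp
    have x1: "absv x \<le> 1" using h r1 by simp
    have "absv ((mat c ** u_min x) $ i $ j) \<le> 1" for i j
      using g_entry[of c x i j] ac x1 by simp
    moreover have "absv (c * c) = 1" using ac by (simp add: mult)
    ultimately have K: "mat c ** u_min x \<in> Kp absv" by (rule Kp_intro[OF _ g_sim])
    have "absv ((mat c ** u_min x) $ i $ j - mat 1 $ i $ j) \<le> r" for i j
      unfolding gform using h ac r0 by (auto simp: mat_def mult)
    then show "mat c ** u_min x \<in> Cset r" unfolding Cset_def using K by blast
  qed
qed

end


context qpm begin

lemma JG_reduce:
  assumes dk: "haar_Kp p absv dk"
    and inv: "\<And>k x. k \<in> Kp absv \<Longrightarrow> h (mat (of_rat c) ** matrix_inv k ** u_min x ** k) = h (mat (of_rat c) ** u_min x)"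
  shows "J_G p absv dx dk c h = ennreal (inverse (1 - inverse (real p))) *
           (\<integral>\<^sup>+ x. ennreal (h (mat (of_rat c) ** u_min x) * absv x) \<partial>dx)"
proof -
  have sp: "space dk = Kp absv" and one: "emeasure dk (Kp absv) = 1"
    using dk unfolding haar_Kp_def by auto
  have "(\<integral>\<^sup>+ k. ennreal (h (mat (of_rat c) ** matrix_inv k ** u_min x ** k) * absv x) \<partial>dk)
        = ennreal (h (mat (of_rat c) ** u_min x) * absv x)" for x
  proof -
    have "(\<integral>\<^sup>+ k. ennreal (h (mat (of_rat c) ** matrix_inv k ** u_min x ** k) * absv x) \<partial>dk)
        = (\<integral>\<^sup>+ k. ennreal (h (mat (of_rat c) ** u_min x) * absv x) \<partial>dk)"
      by (rule nn_integral_cong) (simp add: sp inv)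
    also have "\<dots> = ennreal (h (mat (of_rat c) ** u_min x) * absv x)"
      by (simp add: nn_integral_const sp one)
    finally show ?thesis .
  qed
  then show ?thesis unfolding J_G_def by simp
qed

lemma JG_Xset:
  assumes dk: "haar_Kp p absv dk"
  shows "J_G p absv dx dk c (indicator (Xset D)) = ennreal (inverse (1 - inverse (real p))) *
           (\<integral>\<^sup>+ x. ennreal (indicator (Xset D) (mat (of_rat c) ** u_min x) * absv x) \<partial>dx)"
proof (rule JG_reduce[OF dk])
  fix k x assume k: "k \<in> Kp absv"
  have "mat (of_rat c) ** matrix_inv k ** u_min x ** k \<in> Xset D \<longleftrightarrow> mat (of_rat c) ** u_min x \<in> Xset D"
    by (rule conj_inv[OF _ k]) (rule Xset_mult)
  then show "indicator (Xset D) (mat (of_rat c) ** matrix_inv k ** u_min x ** k) =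
        (indicator (Xset D) (mat (of_rat c) ** u_min x) :: real)" by (simp add: indicator_def)
qed

lemma JG_Cset:
  assumes dk: "haar_Kp p absv dk"
  shows "J_G p absv dx dk c (indicator (Cset r)) = ennreal (inverse (1 - inverse (real p))) *
           (\<integral>\<^sup>+ x. ennreal (indicator (Cset r) (mat (of_rat c) ** u_min x) * absv x) \<partial>dx)"
proof (rule JG_reduce[OF dk])
  fix k x assume k: "k \<in> Kp absv"
  have "mat (of_rat c) ** matrix_inv k ** u_min x ** k \<in> Cset r \<longleftrightarrow> mat (of_rat c) ** u_min x \<in> Cset r"
    by (rule conj_inv[OF _ k]) (rule Cset_mult)
  then show "indicator (Cset r) (mat (of_rat c) ** matrix_inv k ** u_min x ** k) =
        (indicator (Cset r) (mat (of_rat c) ** u_min x) :: real)" by (simp add: indicator_def)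
qed

lemma C0: "0 < 1 - inverse (real p)" using invp1 by simp

lemma aux_ball: "(a::real) \<noteq> 0 \<Longrightarrow> inverse a * (R * a / b) = R * inverse b"
  by (simp add: divide_inverse)

lemma aux_sph: "(x::real) \<noteq> 0 \<Longrightarrow> 1 - inverse x \<noteq> 0 \<Longrightarrow> inverse (1 - inverse x) * (Q * (Q - Q / x)) = Q * Q"
proof -
  assume x: "x \<noteq> 0" and a: "1 - inverse x \<noteq> 0"
  have "Q * (Q - Q / x) = (1 - inverse x) * (Q * Q)" by (simp add: algebra_simps divide_inverse)
  then have "inverse (1 - inverse x) * (Q * (Q - Q / x)) = inverse (1 - inverse x) * ((1 - inverse x) * (Q * Q))"
    by (simp only:)
  also have "\<dots> = (inverse (1 - inverse x) * (1 - inverse x)) * (Q * Q)" by (simp only: mult.assoc)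
  also have "inverse (1 - inverse x) * (1 - inverse x) = 1" using a by (rule left_inverse)
  finally show ?thesis by simp
qed

lemma final_ball: "ennreal (inverse (1 - inverse (real p))) *
   ennreal ((real p powr real_of_int e)^2 * (1 - inverse (real p)) / (1 - inverse (real p ^ 2)))
   = ennreal ((real p powr real_of_int e)^2 * inverse (1 - inverse (real p ^ 2)))"
proof -
  have a: "0 \<le> inverse (1 - inverse (real p))" using C0 by simp
  have b: "0 \<le> (real p powr real_of_int e)^2 * (1 - inverse (real p)) / (1 - inverse (real p ^ 2))"
    using C0 invp2 by simp
  have "ennreal (inverse (1 - inverse (real p))) *
   ennreal ((real p powr real_of_int e)^2 * (1 - inverse (real p)) / (1 - inverse (real p ^ 2)))
   = ennreal (inverse (1 - inverse (real p)) * ((real p powr real_of_int e)^2 * (1 - inverse (real p)) / (1 - inverse (real p ^ 2))))"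
    by (rule ennreal_mult[OF a b, symmetric])
  also have "inverse (1 - inverse (real p)) * ((real p powr real_of_int e)^2 * (1 - inverse (real p)) / (1 - inverse (real p ^ 2)))
      = (real p powr real_of_int e)^2 * inverse (1 - inverse (real p ^ 2))"
    by (rule aux_ball) (use C0 in linarith)
  finally show ?thesis .
qed

lemma final_sph: "ennreal (inverse (1 - inverse (real p))) *
   ennreal (real p powr real_of_int e * (real p powr real_of_int e - real p powr real_of_int (e - 1)))
   = ennreal (real p powr real_of_int (2 * e))"
proof -
  define Q where "Q = real p powr real_of_int e"
  have Q1: "real p powr real_of_int (e - 1) = Q / real p"
    unfolding Q_def using powr_shift1[of e 0] by simp
  have Q2: "real p powr real_of_int (2 * e) = Q * Q" unfolding Q_def P_mult by simp
  have a: "0 \<le> inverse (1 - inverse (real p))" using C0 by simp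
  have Q0: "Q > 0" unfolding Q_def using p_pos by simp
  have "Q / real p \<le> Q" using Q0 p_gt1 by (simp add: divide_le_eq)
  then have b: "0 \<le> Q * (Q - Q / real p)" using Q0 by simp
  have "ennreal (inverse (1 - inverse (real p))) * ennreal (Q * (Q - Q / real p))
     = ennreal (inverse (1 - inverse (real p)) * (Q * (Q - Q / real p)))"
    by (rule ennreal_mult[OF a b, symmetric])
  also have "inverse (1 - inverse (real p)) * (Q * (Q - Q / real p)) = Q * Q"
    by (rule aux_sph) (use C0 p_pos in auto)
  finally show ?thesis unfolding Q1 Q2 Q_def[symmetric] .
qed

end


context qpm begin

lemma integrand_cong:
  assumes "\<And>x. g x \<in> S \<longleftrightarrow> x \<in> A"
  shows "(\<integral>\<^sup>+ x. ennreal (indicator S (g x) * absv x) \<partial>dx) = (\<integral>\<^sup>+ x. ennreal (indicator A x * absv x) \<partial>dx)"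
  by (rule nn_integral_cong) (simp add: indicator_def assms)

lemma integrand_zero:
  assumes "\<And>x. g x \<notin> S"
  shows "(\<integral>\<^sup>+ x. ennreal (indicator S (g x) * absv x) \<partial>dx) = 0"
  using assms by (simp add: indicator_def)

lemma conj1:
  assumes dk: "haar_Kp p absv dk" and c: "c \<noteq> 0" and odd: "odd a3"
  shows "J_G p absv dx dk c (h_coset p absv a1 a2 a3) = 0"
  unfolding h_coset_eq JG_Xset[OF dk]
  using integrand_zero[of "\<lambda>x. mat (of_rat c) ** u_min x" "Xset (Dm a1 a2 a3)"] part1[OF odd c] by simp

lemma conj2:
  assumes dk: "haar_Kp p absv dk" and r: "m \<ge> a1" "a1 \<ge> a2" "a2 \<ge> 0"
  shows "J_G p absv dx dk c (h_coset p absv a1 a2 (2 * m)) =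
          (if a1 = m \<and> a2 = m \<and> padic_abs_rat p c = real p powr real_of_int m
             then ennreal (inverse (1 - inverse (real p ^ 2)))
           else if a1 = m \<and> a1 > a2 \<and> padic_abs_rat p c = real p powr real_of_int m
             then ennreal (real p powr real_of_int (2 * m - 2 * a2))
           else 0)"
proof -
  define g where "g x = mat (of_rat c :: 'a) ** u_min x" for x
  have ac: "absv (of_rat c :: 'a) = padic_abs_rat p c" by (rule rat)
  have char: "g x \<in> Xset (Dm a1 a2 (2 * m)) \<longleftrightarrow>
     (padic_abs_rat p c = P m \<and> a1 = m \<and> (a2 = m \<longrightarrow> absv x \<le> 1) \<and> (a2 < m \<longrightarrow> absv x = P (m - a2)))" for x
  proof
    assume "g x \<in> Xset (Dm a1 a2 (2 * m))"
    then have "absv (of_rat c :: 'a) = P m \<and> a1 = m \<and> (a2 = m \<longrightarrow> absv x \<le> 1) \<and> (a2 < m \<longrightarrow> absv x = P (m - a2))"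
      unfolding g_def by (rule part2_fwd[OF _ r])
    then show "padic_abs_rat p c = P m \<and> a1 = m \<and> (a2 = m \<longrightarrow> absv x \<le> 1) \<and> (a2 < m \<longrightarrow> absv x = P (m - a2))"
      unfolding ac .
  next
    assume h: "padic_abs_rat p c = P m \<and> a1 = m \<and> (a2 = m \<longrightarrow> absv x \<le> 1) \<and> (a2 < m \<longrightarrow> absv x = P (m - a2))"
    show "g x \<in> Xset (Dm a1 a2 (2 * m))" unfolding g_def
    proof (rule part2_bwd)
      show "absv (of_rat c :: 'a) = P m" using h unfolding ac by simp
      show "a1 = m" using h by simp
      show "a2 \<le> m" using r by simp
      show "0 \<le> a2" using r by simp
      show "a2 = m \<Longrightarrow> absv x \<le> 1" using h by simp
      show "a2 < m \<Longrightarrow> absv x = P (m - a2)" using h by simp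
    qed
  qed
  have J: "J_G p absv dx dk c (h_coset p absv a1 a2 (2 * m)) = ennreal (inverse (1 - inverse (real p))) *
           (\<integral>\<^sup>+ x. ennreal (indicator (Xset (Dm a1 a2 (2 * m))) (g x) * absv x) \<partial>dx)"
    unfolding h_coset_eq JG_Xset[OF dk] g_def ..
  show ?thesis
  proof (cases "a1 = m \<and> a2 = m \<and> padic_abs_rat p c = P m")
    case True
    have "g x \<in> Xset (Dm a1 a2 (2 * m)) \<longleftrightarrow> x \<in> pball 0 0" for x
      unfolding char pball_def using True P_0 by simp
    then have "J_G p absv dx dk c (h_coset p absv a1 a2 (2 * m)) = 
        ennreal (inverse (1 - inverse (real p))) * (\<integral>\<^sup>+ x. ennreal (indicator (pball 0 0) x * absv x) \<partial>dx)"
      unfolding J by (subst integrand_cong) auto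
    also have "\<dots> = ennreal (inverse (1 - inverse (real p ^ 2)))"
      unfolding int_ball final_ball using P_0 by simp
    finally show ?thesis using True by simp
  next
    case F1: False
    show ?thesis
    proof (cases "a1 = m \<and> a1 > a2 \<and> padic_abs_rat p c = P m")
      case True
      have "g x \<in> Xset (Dm a1 a2 (2 * m)) \<longleftrightarrow> x \<in> sph (m - a2)" for x
        unfolding char sph_def using True by auto
      then have "J_G p absv dx dk c (h_coset p absv a1 a2 (2 * m)) = 
          ennreal (inverse (1 - inverse (real p))) * (\<integral>\<^sup>+ x. ennreal (indicator (sph (m - a2)) x * absv x) \<partial>dx)"
        unfolding J by (subst integrand_cong) auto
      also have "\<dots> = ennreal (P (2 * (m - a2)))"
        unfolding int_sph final_sph ..
      finally show ?thesis using True F1 by (simp add: algebra_simps)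
    next
      case F2: False
      have "g x \<notin> Xset (Dm a1 a2 (2 * m))" for x
        unfolding char using F1 F2 r by auto
      then have "J_G p absv dx dk c (h_coset p absv a1 a2 (2 * m)) = 0"
        unfolding J using integrand_zero[of g] by simp
      then show ?thesis using F1 F2 by auto
    qed
  qed
qed

lemma conj3:
  assumes dk: "haar_Kp p absv dk" and l: "l \<ge> 1"
  shows "J_G p absv dx dk c (h_level p absv l) =
          (if padic_abs_rat p (c - 1) \<le> real p powr (- real l)
             then ennreal (inverse (real p ^ (2 * l)) * inverse (1 - inverse (real p ^ 2)))
           else 0)"
proof -
  define g where "g x = mat (of_rat c :: 'a) ** u_min x" for x
  have hl: "h_level p absv l = indicator (Cset (P (- int l)))"
    unfolding h_level_def Cset_def by simp
  have ac: "absv (of_rat c - 1 :: 'a) = padic_abs_rat p (c - 1)"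
  proof -
    have e: "(of_rat (c - 1) :: 'a) = of_rat c - 1" by (simp add: of_rat_diff)
    show ?thesis using rat[of "c - 1"] unfolding e .
  qed
  have J: "J_G p absv dx dk c (h_level p absv l) = ennreal (inverse (1 - inverse (real p))) *
           (\<integral>\<^sup>+ x. ennreal (indicator (Cset (P (- int l))) (g x) * absv x) \<partial>dx)"
    unfolding hl JG_Cset[OF dk] g_def ..
  have Pl: "P (- int l) = real p powr (- real l)" by simp
  show ?thesis
  proof (cases "padic_abs_rat p (c - 1) \<le> real p powr (- real l)")
    case True
    have "g x \<in> Cset (P (- int l)) \<longleftrightarrow> x \<in> pball 0 (- int l)" for x
      unfolding g_def part3[OF l] ac pball_def using True by simp
    then have "J_G p absv dx dk c (h_level p absv l) = 
        ennreal (inverse (1 - inverse (real p))) * (\<integral>\<^sup>+ x. ennreal (indicator (pball 0 (- int l)) x * absv x) \<partial>dx)"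
      unfolding J by (subst integrand_cong) auto
    also have "\<dots> = ennreal ((P (- int l))^2 * inverse (1 - inverse (real p ^ 2)))"
      unfolding int_ball final_ball ..
    also have "(P (- int l))^2 = inverse (real p ^ (2 * l))"
      unfolding powr_neg_nat by (simp add: power_mult power_inverse mult.commute)
    finally show ?thesis using True by simp
  next
    case False
    have "g x \<notin> Cset (P (- int l))" for x
      unfolding g_def part3[OF l] ac using False by simp
    then show ?thesis unfolding J using integrand_zero[of g] False by simp
  qed
qed

end

theorem lemma5p9:
  fixes p :: nat and absv :: "'a::field_char_0 \<Rightarrow> real"
    and dx :: "'a measure" and dk :: "'a mat4 measure" and c :: rat
  assumes "prime p" and "is_Qp p absv" and "haar_Qp p absv dx" and "haar_Kp p absv dk"
    and "c \<noteq> 0"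
  shows
    "(\<forall>a1 a2 a3 :: int. a3 \<ge> a1 \<and> a1 \<ge> a2 \<and> a2 \<ge> 0 \<and> odd a3 \<longrightarrow>
        J_G p absv dx dk c (h_coset p absv a1 a2 a3) = 0)
   \<and> (\<forall>m a1 a2 :: int. m \<ge> a1 \<and> a1 \<ge> a2 \<and> a2 \<ge> 0 \<longrightarrow>
        J_G p absv dx dk c (h_coset p absv a1 a2 (2 * m)) =
          (if a1 = m \<and> a2 = m \<and> padic_abs_rat p c = real p powr real_of_int m
             then ennreal (inverse (1 - inverse (real p ^ 2)))
           else if a1 = m \<and> a1 > a2 \<and> padic_abs_rat p c = real p powr real_of_int m
             then ennreal (real p powr real_of_int (2 * m - 2 * a2))
           else 0))
   \<and> (\<forall>l :: nat. l \<ge> 1 \<longrightarrow>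
        J_G p absv dx dk c (h_level p absv l) =
          (if padic_abs_rat p (c - 1) \<le> real p powr (- real l)
             then ennreal (inverse (real p ^ (2 * l)) * inverse (1 - inverse (real p ^ 2)))
           else 0))"
proof -
  interpret qpm p absv dx by unfold_locales (fact assms)+
  show ?thesis using conj1[OF assms(4) assms(5)] conj2[OF assms(4)] conj3[OF assms(4)] by blast
qed


end
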